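(* Let $\bar Q$ be a locally gentle bound quiver, let $F$ be a finite face of the non-kissing complex $\mathcal K_{nk}(\bar Q)$ and let $\alpha$ be an arrow of $Q^{\mathrm{bl}}$. Then the set $F_\alpha$ of walks of $F$ marked at an occurrence of $\alpha^{\pm1}$ is either empty or has a maximal element for the countercurrent order $\prec_\alpha$.
   Context: Locally gentle bound quiver $\bar Q=(Q,I)$: $Q$ finite, $I$ an ideal of $kQ$ generated by paths of length two ($kQ/I$ possibly infinite-dimensional), each vertex with at most two incoming and two outgoing arrows, and for each arrow $\beta$ at most one $\alpha$ with $t(\alpha)=s(\beta)$, $\alpha\beta\notin I$, at most one with $\alpha\beta\in I$, and symmetrically on the outgoing side. $\bar Q^{\mathrm{bl}}$ adds degree-one blossom vertices and arrows so each vertex of $Q_0$ has two incoming and two outgoing arrows, relations completed to stay locally gentle. A walk is a maximal (finite, or eventually cyclic ${}^\infty(c_1^{\varepsilon_1})\sigma(c_2^{\varepsilon_2})^\infty$ with $c_i$ oriented cycles, possibly trivial) string of $\bar Q^{\mathrm{bl}}$, a string being a composable reduced word in arrows and formal inverses with no factor $\pi^{\pm1}$ for a path $\pi\in I$; $\omega\equiv\omega^{-1}$. For $\omega=\prod_{i<\ell<j}\alpha_\ell^{\varepsilon_\ell}$, a substring $\prod_{i'<\ell<j'}\alpha_\ell^{\varepsilon_\ell}$ ($i\le i'<j'\le j$, strict at finite ends, remembered with its position) is on top if ($i'=-\infty$ or $\varepsilon_{i'}=-1$) and ($j'=\infty$ or $\varepsilon_{j'}=1$), at the bottom if ($i'=-\infty$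 or $\varepsilon_{i'}=1$) and ($j'=\infty$ or $\varepsilon_{j'}=-1$). $\omega$ kisses $\omega'$ if a finite string is a top substring of $\omega$ and a bottom substring of $\omega'$. Faces of $\mathcal K_{nk}(\bar Q)$ are sets of pairwise non-kissing walks (none kissing itself). A marked walk is a walk together with a marked occurrence of an arrow $\alpha^{\pm1}$ in it; for an infinite straight walk ${}^\infty c^\infty$ all markings at occurrences of $\alpha^{\pm1}$ are considered equal. Countercurrent order: for two distinct non-kissing walks $\mu_\star,\nu_\star$ marked at occurrences of $\alpha^{\pm1}$, let $\sigma$ be their maximal common substring containing the marked occurrence; they split at an endpoint of $\sigma$, and $\mu_\star\prec_\alpha\nu_\star$ if $\mu_\star$ enters and/or exits $\sigma$ in the direction pointed by $\alpha$ while $\nu_\star$ enters and/or exits $\sigma$ in the direction opposite to $\alpha$. *)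

theory Defs
  imports Main
begin

text \<open>A bound quiver is given by a vertex set V, an arrow set A, source and target
maps s t, and a set R of paths of length two (pairs (a,b) meaning the path a b,
i.e. first a then b, with t a = s b) generating the ideal I.  Since I is
generated by paths of length two, a path lies in I iff it has a factor in R.\<close>

definition locally_gentle ::
  "'v set \<Rightarrow> 'a set \<Rightarrow> ('a \<Rightarrow> 'v) \<Rightarrow> ('a \<Rightarrow> 'v) \<Rightarrow> ('a \<times> 'a) set \<Rightarrow> bool" where
  "locally_gentle V A s t R \<longleftrightarrow>
     finite V \<and> finite A \<and> (\<forall>a\<in>A. s a \<in> V \<and> t a \<in> V) \<and>
     R \<subseteq> {(a, b). a \<in> A \<and> b \<in> A \<and> t a = s b} \<and>
     (\<forall>v\<in>V. card {a\<in>A. t a = v} \<le> 2 \<and> card {a\<in>A. s a = v} \<le> 2) \<and>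
     (\<forall>b\<in>A. card {a\<in>A. t a = s b \<and> (a, b) \<notin> R} \<le> 1 \<and>
             card {a\<in>A. t a = s b \<and> (a, b) \<in> R} \<le> 1) \<and>
     (\<forall>a\<in>A. card {b\<in>A. s b = t a \<and> (a, b) \<notin> R} \<le> 1 \<and>
             card {b\<in>A. s b = t a \<and> (a, b) \<in> R} \<le> 1)"

definition blossoming ::
  "'v set \<Rightarrow> 'a set \<Rightarrow> ('a \<times> 'a) set \<Rightarrow> 'v set \<Rightarrow> 'a set \<Rightarrow> ('a \<times> 'a) set \<Rightarrow>
   ('a \<Rightarrow> 'v) \<Rightarrow> ('a \<Rightarrow> 'v) \<Rightarrow> bool" where
  "blossoming V A R Vb Ab Rb s t \<longleftrightarrow>
     V \<subseteq> Vb \<and> A \<subseteq> Ab \<and> locally_gentle Vb Ab s t Rb \<and> R = Rb \<inter> (A \<times> A) \<and>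
     (\<forall>v\<in>V. card {a\<in>Ab. t a = v} = 2 \<and> card {a\<in>Ab. s a = v} = 2) \<and>
     (\<forall>v\<in>Vb - V. card {a\<in>Ab. s a = v} + card {a\<in>Ab. t a = v} = 1) \<and>
     (\<forall>a\<in>Ab - A. (s a \<in> V \<and> t a \<in> Vb - V) \<or> (s a \<in> Vb - V \<and> t a \<in> V))"

text \<open>A letter is an arrow with a sign: (a, True) is the arrow a, (a, False) is
its formal inverse a^{-1}.\<close>

type_synonym 'a letter = "'a \<times> bool"

definition lsrc :: "('a \<Rightarrow> 'v) \<Rightarrow> ('a \<Rightarrow> 'v) \<Rightarrow> 'a letter \<Rightarrow> 'v" where
  "lsrc s t x = (if snd x then s (fst x) else t (fst x))"

definition ltgt :: "('a \<Rightarrow> 'v) \<Rightarrow> ('a \<Rightarrow> 'v) \<Rightarrow> 'a letter \<Rightarrow> 'v" where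
  "ltgt s t x = (if snd x then t (fst x) else s (fst x))"

definition linv :: "'a letter \<Rightarrow> 'a letter" where
  "linv x = (fst x, \<not> snd x)"

definition ok_pair ::
  "'a set \<Rightarrow> ('a \<Rightarrow> 'v) \<Rightarrow> ('a \<Rightarrow> 'v) \<Rightarrow> ('a \<times> 'a) set \<Rightarrow> 'a letter \<Rightarrow> 'a letter \<Rightarrow> bool" where
  "ok_pair Ab s t Rb y x \<longleftrightarrow>
     fst y \<in> Ab \<and> fst x \<in> Ab \<and> ltgt s t y = lsrc s t x \<and> x \<noteq> linv y \<and>
     (snd y \<and> snd x \<longrightarrow> (fst y, fst x) \<notin> Rb) \<and>
     (\<not> snd y \<and> \<not> snd x \<longrightarrow> (fst x, fst y) \<notin> Rb)"

text \<open>A (possibly infinite) string is represented by an interval D of integers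
(its positions) and the letter at each position; the string is
prod_{l in D} L l.  Walks are identified up to shift of indices and inversion.\<close>

type_synonym 'a walkrep = "int set \<times> (int \<Rightarrow> 'a letter)"

definition is_interval :: "int set \<Rightarrow> bool" where
  "is_interval D \<longleftrightarrow> (\<forall>a b c. a \<in> D \<longrightarrow> c \<in> D \<longrightarrow> a \<le> b \<longrightarrow> b \<le> c \<longrightarrow> b \<in> D)"

definition is_string ::
  "'a set \<Rightarrow> ('a \<Rightarrow> 'v) \<Rightarrow> ('a \<Rightarrow> 'v) \<Rightarrow> ('a \<times> 'a) set \<Rightarrow> 'a walkrep \<Rightarrow> bool" where
  "is_string Ab s t Rb w \<longleftrightarrow>
     fst w \<noteq> {} \<and> is_interval (fst w) \<and> (\<forall>l\<in>fst w. fst (snd w l) \<in> Ab) \<and>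
     (\<forall>l. l \<in> fst w \<longrightarrow> l + 1 \<in> fst w \<longrightarrow> ok_pair Ab s t Rb (snd w l) (snd w (l + 1)))"

text \<open>A walk: a maximal string (it cannot be extended at a finite end), whose
infinite ends are eventually periodic with constant direction, i.e. of the form
c^infty (resp. ^infty c) for an oriented cycle c traversed forwards or backwards.\<close>

definition is_walk ::
  "'a set \<Rightarrow> ('a \<Rightarrow> 'v) \<Rightarrow> ('a \<Rightarrow> 'v) \<Rightarrow> ('a \<times> 'a) set \<Rightarrow> 'a walkrep \<Rightarrow> bool" where
  "is_walk Ab s t Rb w \<longleftrightarrow>
     is_string Ab s t Rb w \<and>
     (\<forall>h\<in>fst w. (\<forall>l\<in>fst w. l \<le> h) \<longrightarrow> \<not> (\<exists>x. ok_pair Ab s t Rb (snd w h) x)) \<and>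
     (\<forall>h\<in>fst w. (\<forall>l\<in>fst w. h \<le> l) \<longrightarrow> \<not> (\<exists>x. ok_pair Ab s t Rb x (snd w h))) \<and>
     ((\<exists>h\<in>fst w. \<forall>l\<in>fst w. l \<le> h) \<or>
      (\<exists>N p. p > 0 \<and> {N..} \<subseteq> fst w \<and>
         (\<forall>l\<ge>N. snd w (l + p) = snd w l \<and> snd (snd w l) = snd (snd w N)))) \<and>
     ((\<exists>h\<in>fst w. \<forall>l\<in>fst w. h \<le> l) \<or>
      (\<exists>N p. p > 0 \<and> {..N} \<subseteq> fst w \<and>
         (\<forall>l\<le>N. snd w (l - p) = snd w l \<and> snd (snd w l) = snd (snd w N))))"

definition wrev :: "'a walkrep \<Rightarrow> 'a walkrep" where
  "wrev w = (uminus ` fst w, \<lambda>l. linv (snd w (- l)))"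

text \<open>The finite substring with letters at positions i < l < j (i, j in D, so that
the bounding letters exist) is on top / at the bottom.\<close>

definition top_at :: "'a walkrep \<Rightarrow> int \<Rightarrow> int \<Rightarrow> bool" where
  "top_at w i j \<longleftrightarrow> i < j \<and> i \<in> fst w \<and> j \<in> fst w \<and>
     \<not> snd (snd w i) \<and> snd (snd w j)"

definition bottom_at :: "'a walkrep \<Rightarrow> int \<Rightarrow> int \<Rightarrow> bool" where
  "bottom_at w i j \<longleftrightarrow> i < j \<and> i \<in> fst w \<and> j \<in> fst w \<and>
     snd (snd w i) \<and> \<not> snd (snd w j)"

text \<open>The substrings of w at (i,j) and of w' at (k,l) are the same string: same
length, same letters and same starting vertex (relevant for empty substrings).\<close>

definition same_sub ::
  "('a \<Rightarrow> 'v) \<Rightarrow> ('a \<Rightarrow> 'v) \<Rightarrow> 'a walkrep \<Rightarrow> int \<Rightarrow> int \<Rightarrow> 'a walkrep \<Rightarrow> int \<Rightarrow> int \<Rightarrow> bool" where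
  "same_sub s t w i j w' k l \<longleftrightarrow> j - i = l - k \<and>
     ltgt s t (snd w i) = ltgt s t (snd w' k) \<and>
     (\<forall>m. 0 < m \<longrightarrow> m < j - i \<longrightarrow> snd w (i + m) = snd w' (k + m))"

definition kisses_dir :: "('a \<Rightarrow> 'v) \<Rightarrow> ('a \<Rightarrow> 'v) \<Rightarrow> 'a walkrep \<Rightarrow> 'a walkrep \<Rightarrow> bool" where
  "kisses_dir s t w w' \<longleftrightarrow>
     (\<exists>i j k l. top_at w i j \<and> bottom_at w' k l \<and> same_sub s t w i j w' k l)"

definition kisses :: "('a \<Rightarrow> 'v) \<Rightarrow> ('a \<Rightarrow> 'v) \<Rightarrow> 'a walkrep \<Rightarrow> 'a walkrep \<Rightarrow> bool" where
  "kisses s t w w' \<longleftrightarrow> kisses_dir s t w w' \<or> kisses_dir s t w (wrev w')"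

definition nk_face ::
  "'a set \<Rightarrow> ('a \<Rightarrow> 'v) \<Rightarrow> ('a \<Rightarrow> 'v) \<Rightarrow> ('a \<times> 'a) set \<Rightarrow> 'a walkrep set \<Rightarrow> bool" where
  "nk_face Ab s t Rb F \<longleftrightarrow>
     (\<forall>w\<in>F. is_walk Ab s t Rb w) \<and> (\<forall>w\<in>F. \<forall>w'\<in>F. \<not> kisses s t w w')"

text \<open>A walk w marked at position p (an occurrence of alpha^{+-1}) is represented
canonically by re-indexing (and inverting if needed) so that the marked letter is
at position 0 and reads as alpha (positively).\<close>

definition wshift :: "'a walkrep \<Rightarrow> int \<Rightarrow> 'a walkrep" where
  "wshift w p = ((\<lambda>l. l - p) ` fst w, \<lambda>k. snd w (p + k))"

definition mnorm :: "'a walkrep \<Rightarrow> int \<Rightarrow> 'a walkrep" where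
  "mnorm w p = (if snd (snd w p) then wshift w p else wshift (wrev w) (- p))"

definition marked_set :: "'a walkrep set \<Rightarrow> 'a \<Rightarrow> 'a walkrep set" where
  "marked_set F \<alpha> = {mnorm w p | w p. w \<in> F \<and> p \<in> fst w \<and> fst (snd w p) = \<alpha>}"

definition agree_at :: "'a walkrep \<Rightarrow> 'a walkrep \<Rightarrow> int \<Rightarrow> bool" where
  "agree_at m n k \<longleftrightarrow> k \<in> fst m \<and> k \<in> fst n \<and> snd m k = snd n k"

text \<open>The normalized marked walks m, n split at position k: the maximal common
substring sigma containing the marked occurrence (position 0) ends just before
position k (k > 0) or just after position k (k < 0), and both walks continue there
with different letters.\<close>

definition split_at :: "'a walkrep \<Rightarrow> 'a walkrep \<Rightarrow> int \<Rightarrow> bool" where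
  "split_at m n k \<longleftrightarrow> k \<noteq> 0 \<and> k \<in> fst m \<and> k \<in> fst n \<and> snd m k \<noteq> snd n k \<and>
     (\<forall>j. (0 \<le> j \<and> j < k) \<or> (k < j \<and> j \<le> 0) \<longrightarrow> agree_at m n j)"

text \<open>Markings of an infinite straight walk ^infty c ^infty are all identified.\<close>

definition straight_same :: "'a walkrep \<Rightarrow> 'a walkrep \<Rightarrow> bool" where
  "straight_same m n \<longleftrightarrow> fst m = UNIV \<and> fst n = UNIV \<and> (\<forall>k. snd (snd m k)) \<and>
     (\<exists>d. \<forall>k. snd n k = snd m (k + d))"

text \<open>Countercurrent order: m precedes n iff at the endpoint(s) of sigma where
they split, m enters/exits sigma along a direct arrow (in the direction pointed
by alpha) while n enters/exits along an inverse arrow (opposite to alpha).\<close>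

definition cc_less :: "'a walkrep \<Rightarrow> 'a walkrep \<Rightarrow> bool" where
  "cc_less m n \<longleftrightarrow> \<not> straight_same m n \<and> (\<exists>k. split_at m n k) \<and>
     (\<forall>k. split_at m n k \<longrightarrow> snd (snd m k) \<and> \<not> snd (snd n k))"

end

theory Submission
  imports Defs
begin

lemma wshift_mem[simp]: "k \<in> fst (wshift w p) \<longleftrightarrow> p + k \<in> fst w"
  unfolding wshift_def by (auto simp: image_iff) (metis add_diff_cancel_left')

lemma wshift_snd[simp]: "snd (wshift w p) k = snd w (p + k)"
  unfolding wshift_def by simp

lemma wrev_mem[simp]: "k \<in> fst (wrev w) \<longleftrightarrow> - k \<in> fst w"
  unfolding wrev_def by (auto simp: image_iff) (metis minus_minus)

lemma wrev_snd[simp]: "snd (wrev w) k = linv (snd w (- k))"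
  unfolding wrev_def by simp

lemma linv_simps[simp]: "fst (linv x) = fst x" "snd (linv x) = (\<not> snd x)" "linv (linv x) = x"
  unfolding linv_def by auto

lemma lsrc_linv[simp]: "lsrc s t (linv x) = ltgt s t x" and ltgt_linv[simp]: "ltgt s t (linv x) = lsrc s t x"
  unfolding lsrc_def ltgt_def linv_def by auto

lemma wrev_wrev[simp]: "wrev (wrev w) = w"
proof -
  have "fst (wrev (wrev w)) = fst w" by (auto simp: set_eq_iff)
  moreover have "snd (wrev (wrev w)) = snd w" by auto
  ultimately show ?thesis by (simp add: prod_eq_iff)
qed

lemma ok_pair_rev: "ok_pair Ab s t Rb y x \<Longrightarrow> ok_pair Ab s t Rb (linv x) (linv y)"
  unfolding ok_pair_def by (cases x; cases y; auto simp: linv_def lsrc_def ltgt_def)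

lemma mnorm_wrev: "mnorm (wrev w) (- p) = mnorm w p"
  unfolding mnorm_def by simp

lemma three_le2:
  assumes "finite S" "card S \<le> 2" "a \<in> S" "b \<in> S" "c \<in> S" "a \<noteq> b" "a \<noteq> c"
  shows "b = c"
proof (rule ccontr)
  assume "b \<noteq> c"
  hence "card {a, b, c} = 3" using assms by auto
  moreover have "card {a,b,c} \<le> card S" using assms by (intro card_mono) auto
  ultimately show False using assms by simp
qed

lemma letter_eq: "snd x1 \<Longrightarrow> snd x2 \<Longrightarrow> fst x1 = fst x2 \<Longrightarrow> x1 = (x2::'a letter)"
  by (simp add: prod_eq_iff)

lemma lg_fin: "locally_gentle V A s t R \<Longrightarrow> finite A"
  unfolding locally_gentle_def by simp
lemma lg_st: "locally_gentle V A s t R \<Longrightarrow> a \<in> A \<Longrightarrow> s a \<in> V \<and> t a \<in> V"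
  unfolding locally_gentle_def by simp
lemma lg_io: "locally_gentle V A s t R \<Longrightarrow> v \<in> V \<Longrightarrow> card {a\<in>A. t a = v} \<le> 2 \<and> card {a\<in>A. s a = v} \<le> 2"
  unfolding locally_gentle_def by simp
lemma LG1: "locally_gentle V A s t R \<Longrightarrow> b \<in> A \<Longrightarrow> card {a\<in>A. t a = s b \<and> (a, b) \<notin> R} \<le> 1"
  unfolding locally_gentle_def by simp
lemma LG2: "locally_gentle V A s t R \<Longrightarrow> a \<in> A \<Longrightarrow> card {b\<in>A. s b = t a \<and> (a, b) \<notin> R} \<le> 1"
  unfolding locally_gentle_def by simp

lemma UDf:
  assumes lg: "locally_gentle Vb Ab s t Rb"
    and o1: "ok_pair Ab s t Rb y x1" and o2: "ok_pair Ab s t Rb y x2"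
    and d: "snd x1" "snd x2"
  shows "x1 = x2"
proof (cases "snd y")
  case True
  let ?S = "{b\<in>Ab. s b = t (fst y) \<and> (fst y, b) \<notin> Rb}"
  have fA: "finite Ab" using lg_fin[OF lg] .
  have fin: "finite ?S" using fA by simp
  have yA: "fst y \<in> Ab" using o1 unfolding ok_pair_def by blast
  have c1: "card ?S \<le> Suc 0" using LG2[OF lg yA] by simp
  have m: "fst x1 \<in> ?S" "fst x2 \<in> ?S" using o1 o2 d True
    unfolding ok_pair_def lsrc_def ltgt_def by auto
  have "fst x1 = fst x2" using c1 m unfolding card_le_Suc0_iff_eq[OF fin] by blast
  thus ?thesis using d letter_eq by blast
next
  case False
  let ?S = "{a\<in>Ab. s a = s (fst y)}"
  have fA: "finite Ab" using lg_fin[OF lg] .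
  have fin: "finite ?S" using fA by simp
  have yA: "fst y \<in> Ab" using o1 unfolding ok_pair_def by blast
  have "s (fst y) \<in> Vb" using lg_st[OF lg yA] by blast
  hence c2: "card ?S \<le> 2" using lg_io[OF lg] by simp
  have m: "fst x1 \<in> ?S" "fst x2 \<in> ?S" "fst y \<in> ?S" "fst y \<noteq> fst x1" "fst y \<noteq> fst x2"
    using o1 o2 d False
    unfolding ok_pair_def lsrc_def ltgt_def linv_def by (auto simp: prod_eq_iff)
  have "fst x1 = fst x2" by (rule three_le2[OF fin c2 m(3) m(1) m(2) m(4) m(5)])
  thus ?thesis using d letter_eq by blast
qed

lemma UDb:
  assumes lg: "locally_gentle Vb Ab s t Rb"
    and o1: "ok_pair Ab s t Rb x1 z" and o2: "ok_pair Ab s t Rb x2 z"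
    and d: "snd x1" "snd x2"
  shows "x1 = x2"
proof (cases "snd z")
  case True
  let ?S = "{a\<in>Ab. t a = s (fst z) \<and> (a, fst z) \<notin> Rb}"
  have fA: "finite Ab" using lg_fin[OF lg] .
  have fin: "finite ?S" using fA by simp
  have yA: "fst z \<in> Ab" using o1 unfolding ok_pair_def by blast
  have c1: "card ?S \<le> Suc 0" using LG1[OF lg yA] by simp
  have m: "fst x1 \<in> ?S" "fst x2 \<in> ?S" using o1 o2 d True
    unfolding ok_pair_def lsrc_def ltgt_def by auto
  have "fst x1 = fst x2" using c1 m unfolding card_le_Suc0_iff_eq[OF fin] by blast
  thus ?thesis using d letter_eq by blast
next
  case False
  let ?S = "{a\<in>Ab. t a = t (fst z)}"
  have fA: "finite Ab" using lg_fin[OF lg] .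
  have fin: "finite ?S" using fA by simp
  have yA: "fst z \<in> Ab" using o1 unfolding ok_pair_def by blast
  have "t (fst z) \<in> Vb" using lg_st[OF lg yA] by blast
  hence c2: "card ?S \<le> 2" using lg_io[OF lg] by simp
  have m: "fst x1 \<in> ?S" "fst x2 \<in> ?S" "fst z \<in> ?S" "fst z \<noteq> fst x1" "fst z \<noteq> fst x2"
    using o1 o2 d False
    unfolding ok_pair_def lsrc_def ltgt_def linv_def by (auto simp: prod_eq_iff)
  have "fst x1 = fst x2" by (rule three_le2[OF fin c2 m(3) m(1) m(2) m(4) m(5)])
  thus ?thesis using d letter_eq by blast
qed

definition good :: "'a set \<Rightarrow> ('a \<Rightarrow> 'v) \<Rightarrow> ('a \<Rightarrow> 'v) \<Rightarrow> ('a \<times> 'a) set \<Rightarrow> 'a \<Rightarrow> 'a walkrep \<Rightarrow> bool" where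
  "good Ab s t Rb \<alpha> m \<longleftrightarrow> 0 \<in> fst m \<and> is_interval (fst m) \<and> snd m 0 = (\<alpha>, True) \<and>
    (\<forall>l. l \<in> fst m \<longrightarrow> l + 1 \<in> fst m \<longrightarrow> ok_pair Ab s t Rb (snd m l) (snd m (l + 1))) \<and>
    (\<forall>h. h \<in> fst m \<longrightarrow> h + 1 \<notin> fst m \<longrightarrow> (\<forall>x. \<not> ok_pair Ab s t Rb (snd m h) x)) \<and>
    (\<forall>h. h \<in> fst m \<longrightarrow> h - 1 \<notin> fst m \<longrightarrow> (\<forall>x. \<not> ok_pair Ab s t Rb x (snd m h)))"

lemma good_0: "good Ab s t Rb \<alpha> m \<Longrightarrow> 0 \<in> fst m"
  unfolding good_def by blast
lemma good_at0: "good Ab s t Rb \<alpha> m \<Longrightarrow> snd m 0 = (\<alpha>, True)"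
  unfolding good_def by blast
lemma good_int: "good Ab s t Rb \<alpha> m \<Longrightarrow> a \<in> fst m \<Longrightarrow> c \<in> fst m \<Longrightarrow> a \<le> b \<Longrightarrow> b \<le> c \<Longrightarrow> b \<in> fst m"
  unfolding good_def is_interval_def by blast
lemma good_ok: "good Ab s t Rb \<alpha> m \<Longrightarrow> l \<in> fst m \<Longrightarrow> l + 1 \<in> fst m \<Longrightarrow> ok_pair Ab s t Rb (snd m l) (snd m (l + 1))"
  unfolding good_def by blast
lemma good_rmax: "good Ab s t Rb \<alpha> m \<Longrightarrow> h \<in> fst m \<Longrightarrow> h + 1 \<notin> fst m \<Longrightarrow> \<not> ok_pair Ab s t Rb (snd m h) x"
  unfolding good_def by blast
lemma good_lmax: "good Ab s t Rb \<alpha> m \<Longrightarrow> h \<in> fst m \<Longrightarrow> h - 1 \<notin> fst m \<Longrightarrow> \<not> ok_pair Ab s t Rb x (snd m h)"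
  unfolding good_def by blast

lemma int_least:
  fixes a j :: int
  assumes "a \<le> j" "\<not> P j"
  shows "\<exists>i. a \<le> i \<and> i \<le> j \<and> \<not> P i \<and> (\<forall>l. a \<le> l \<longrightarrow> l < i \<longrightarrow> P l)"
proof -
  have "\<exists>n::nat. \<not> P (a + int n)" using assms by (intro exI[of _ "nat (j - a)"]) simp
  then obtain n where n: "\<not> P (a + int n)" "\<forall>m<n. P (a + int m)" using exists_least_iff[of "\<lambda>n. \<not> P (a + int n)"] by blast
  have "a + int n \<le> j"
  proof (rule ccontr)
    assume "\<not> a + int n \<le> j"
    then have "nat (j - a) < n" using assms by linarith
    then have "P (a + int (nat (j - a)))" using n by blast
    then show False using assms by simp
  qed
  moreover have "\<forall>l. a \<le> l \<longrightarrow> l < a + int n \<longrightarrow> P l"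
  proof (intro allI impI)
    fix l assume "a \<le> l" "l < a + int n"
    then have "nat (l - a) < n" by linarith
    then have "P (a + int (nat (l - a)))" using n by blast
    then show "P l" using \<open>a \<le> l\<close> by simp
  qed
  ultimately show ?thesis using n by (intro exI[of _ "a + int n"]) simp
qed

lemma int_greatest:
  fixes a j :: int
  assumes "j \<le> a" "\<not> P j"
  shows "\<exists>i. j \<le> i \<and> i \<le> a \<and> \<not> P i \<and> (\<forall>l. i < l \<longrightarrow> l \<le> a \<longrightarrow> P l)"
proof -
  obtain i where i: "- a \<le> i" "i \<le> - j" "\<not> P (- i)" "\<forall>l. - a \<le> l \<longrightarrow> l < i \<longrightarrow> P (- l)"
    using int_least[of "- a" "- j" "\<lambda>x. P (- x)"] assms by auto
  show ?thesis
  proof (intro exI[of _ "- i"] conjI allI impI)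
    fix l assume "- i < l" "l \<le> a"
    then show "P l" using i(4)[rule_format, of "- l"] by simp
  qed (use i in auto)
qed

lemma agree_sym: "agree_at m n j \<Longrightarrow> agree_at n m j"
  unfolding agree_at_def by auto
lemma agree_trans: "agree_at m n j \<Longrightarrow> agree_at n q j \<Longrightarrow> agree_at m q j"
  unfolding agree_at_def by auto
lemma agree0: "good Ab s t Rb \<alpha> m \<Longrightarrow> good Ab s t Rb \<alpha> n \<Longrightarrow> agree_at m n 0"
  unfolding agree_at_def using good_0 good_at0 by metis

lemma R1:
  assumes gm: "good Ab s t Rb \<alpha> m" and gn: "good Ab s t Rb \<alpha> n" and k: "0 < k" "k \<in> fst m"
    and ag: "\<forall>j. 0 \<le> j \<and> j < k \<longrightarrow> agree_at m n j"
  shows "k \<in> fst n"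
proof (rule ccontr)
  assume nk: "k \<notin> fst n"
  have a: "agree_at m n (k - 1)" using ag k by auto
  hence "k - 1 \<in> fst n" "k - 1 \<in> fst m" "snd m (k - 1) = snd n (k - 1)" unfolding agree_at_def by auto
  moreover have "ok_pair Ab s t Rb (snd m (k - 1)) (snd m (k - 1 + 1))"
    using good_ok[OF gm, of "k - 1"] calculation k by simp
  moreover have "\<not> ok_pair Ab s t Rb (snd n (k - 1)) (snd m (k - 1 + 1))"
    using good_rmax[OF gn, of "k - 1"] calculation nk by simp
  ultimately show False by simp
qed

lemma L1:
  assumes gm: "good Ab s t Rb \<alpha> m" and gn: "good Ab s t Rb \<alpha> n" and k: "k < 0" "k \<in> fst m"
    and ag: "\<forall>j. k < j \<and> j \<le> 0 \<longrightarrow> agree_at m n j"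
  shows "k \<in> fst n"
proof (rule ccontr)
  assume nk: "k \<notin> fst n"
  have a: "agree_at m n (k + 1)" using ag k by auto
  hence "k + 1 \<in> fst n" "k + 1 \<in> fst m" "snd m (k + 1) = snd n (k + 1)" unfolding agree_at_def by auto
  moreover have "ok_pair Ab s t Rb (snd m k) (snd m (k + 1))"
    using good_ok[OF gm, of "k"] calculation k by simp
  moreover have "\<not> ok_pair Ab s t Rb (snd m k) (snd n (k + 1))"
    using good_lmax[OF gn, of "k + 1"] calculation nk by simp
  ultimately show False by simp
qed

lemma splitR_intro: "0 < k \<Longrightarrow> k \<in> fst m \<Longrightarrow> k \<in> fst n \<Longrightarrow> snd m k \<noteq> snd n k \<Longrightarrow>
   (\<forall>j. 0 \<le> j \<and> j < k \<longrightarrow> agree_at m n j) \<Longrightarrow> split_at m n k"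
  unfolding split_at_def by auto
lemma splitL_intro: "k < 0 \<Longrightarrow> k \<in> fst m \<Longrightarrow> k \<in> fst n \<Longrightarrow> snd m k \<noteq> snd n k \<Longrightarrow>
   (\<forall>j. k < j \<and> j \<le> 0 \<longrightarrow> agree_at m n j) \<Longrightarrow> split_at m n k"
  unfolding split_at_def by auto
lemma split_D: "split_at m n k \<Longrightarrow> k \<noteq> 0 \<and> k \<in> fst m \<and> k \<in> fst n \<and> snd m k \<noteq> snd n k"
  unfolding split_at_def by auto
lemma splitR_ag: "split_at m n k \<Longrightarrow> 0 < k \<Longrightarrow> 0 \<le> j \<Longrightarrow> j < k \<Longrightarrow> agree_at m n j"
  unfolding split_at_def by auto
lemma splitL_ag: "split_at m n k \<Longrightarrow> k < 0 \<Longrightarrow> k < j \<Longrightarrow> j \<le> 0 \<Longrightarrow> agree_at m n j"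
  unfolding split_at_def by auto
lemma cc_dir: "cc_less m n \<Longrightarrow> split_at m n k \<Longrightarrow> snd (snd m k) \<and> \<not> snd (snd n k)"
  unfolding cc_less_def by blast
lemma cc_ex: "cc_less m n \<Longrightarrow> \<exists>k. split_at m n k"
  unfolding cc_less_def by blast
lemma agree_D: "agree_at m n j \<Longrightarrow> j \<in> fst m \<and> j \<in> fst n \<and> snd m j = snd n j"
  unfolding agree_at_def by auto
lemma agree_I: "j \<in> fst m \<Longrightarrow> j \<in> fst n \<Longrightarrow> snd m j = snd n j \<Longrightarrow> agree_at m n j"
  unfolding agree_at_def by auto

lemma RA:
  assumes gm: "good Ab s t Rb \<alpha> m" and gn: "good Ab s t Rb \<alpha> n" and gq: "good Ab s t Rb \<alpha> q"
    and mn: "cc_less m n" and nq: "cc_less n q" and sp: "split_at m q k" and k: "0 < k"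
  shows "snd (snd m k) \<and> \<not> snd (snd q k)"
proof -
  have kd: "k \<in> fst m" "k \<in> fst q" "snd m k \<noteq> snd q k" using split_D[OF sp] by auto
  have agq: "\<And>j. 0 \<le> j \<Longrightarrow> j < k \<Longrightarrow> agree_at m q j" using splitR_ag[OF sp k] by blast
  show ?thesis
  proof (cases "\<forall>j. 0 \<le> j \<and> j < k \<longrightarrow> agree_at m n j")
    case True
    have kn: "k \<in> fst n" using R1[OF gm gn k kd(1) True] .
    have agnq: "\<forall>j. 0 \<le> j \<and> j < k \<longrightarrow> agree_at n q j"
      using True agq agree_sym agree_trans by blast
    show ?thesis
    proof (cases "snd m k = snd n k")
      case True
      have "split_at n q k" using splitR_intro[OF k kn kd(2) _ agnq] True kd(3) by simp
      then show ?thesis using cc_dir[OF nq] True by simp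
    next
      case False
      have "split_at m n k" using splitR_intro[OF k kd(1) kn False] \<open>\<forall>j. 0 \<le> j \<and> j < k \<longrightarrow> agree_at m n j\<close> by blast
      hence d: "snd (snd m k)" "\<not> snd (snd n k)" using cc_dir[OF mn] by auto
      have "snd n k = snd q k"
      proof (rule ccontr)
        assume "snd n k \<noteq> snd q k"
        hence "split_at n q k" using splitR_intro[OF k kn kd(2) _ agnq] by simp
        thus False using cc_dir[OF nq] d by simp
      qed
      then show ?thesis using d by simp
    qed
  next
    case False
    then obtain j where "0 \<le> j" "j < k" "\<not> agree_at m n j" by blast
    then obtain i where i: "0 \<le> i" "i \<le> j" "\<not> agree_at m n i" "\<forall>l. 0 \<le> l \<longrightarrow> l < i \<longrightarrow> agree_at m n l"
      using int_least[of 0 j "agree_at m n"] by blast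
    have i0: "0 < i" using i agree0[OF gm gn] by (cases "i = 0") auto
    have ik: "i < k" using i \<open>j < k\<close> by simp
    have im: "i \<in> fst m" "snd m i = snd q i" "i \<in> fst q" using agree_D[OF agq[of i]] i ik by auto
    have inn: "i \<in> fst n" using R1[OF gm gn i0 im(1)] i by blast
    have ne: "snd m i \<noteq> snd n i" using i(3) im inn agree_I by blast
    have "split_at m n i" using splitR_intro[OF i0 im(1) inn ne] i by blast
    hence d: "snd (snd m i)" "\<not> snd (snd n i)" using cc_dir[OF mn] by auto
    have "\<forall>l. 0 \<le> l \<and> l < i \<longrightarrow> agree_at n q l" using i(4) agq ik agree_sym agree_trans
      by (meson less_trans)
    hence "split_at n q i" using splitR_intro[OF i0 inn im(3)] ne im(2) by simp
    then show ?thesis using cc_dir[OF nq] d by simp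
  qed
qed

lemma LA:
  assumes gm: "good Ab s t Rb \<alpha> m" and gn: "good Ab s t Rb \<alpha> n" and gq: "good Ab s t Rb \<alpha> q"
    and mn: "cc_less m n" and nq: "cc_less n q" and sp: "split_at m q k" and k: "k < 0"
  shows "snd (snd m k) \<and> \<not> snd (snd q k)"
proof -
  have kd: "k \<in> fst m" "k \<in> fst q" "snd m k \<noteq> snd q k" using split_D[OF sp] by auto
  have agq: "\<And>j. k < j \<Longrightarrow> j \<le> 0 \<Longrightarrow> agree_at m q j" using splitL_ag[OF sp k] by blast
  show ?thesis
  proof (cases "\<forall>j. k < j \<and> j \<le> 0 \<longrightarrow> agree_at m n j")
    case True
    have kn: "k \<in> fst n" using L1[OF gm gn k kd(1) True] .
    have agnq: "\<forall>j. k < j \<and> j \<le> 0 \<longrightarrow> agree_at n q j"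
      using True agq agree_sym agree_trans by blast
    show ?thesis
    proof (cases "snd m k = snd n k")
      case True
      have "split_at n q k" using splitL_intro[OF k kn kd(2) _ agnq] True kd(3) by simp
      then show ?thesis using cc_dir[OF nq] True by simp
    next
      case False
      have "split_at m n k" using splitL_intro[OF k kd(1) kn False] \<open>\<forall>j. k < j \<and> j \<le> 0 \<longrightarrow> agree_at m n j\<close> by blast
      hence d: "snd (snd m k)" "\<not> snd (snd n k)" using cc_dir[OF mn] by auto
      have "snd n k = snd q k"
      proof (rule ccontr)
        assume "snd n k \<noteq> snd q k"
        hence "split_at n q k" using splitL_intro[OF k kn kd(2) _ agnq] by simp
        thus False using cc_dir[OF nq] d by simp
      qed
      then show ?thesis using d by simp
    qed
  next
    case False
    then obtain j where "k < j" "j \<le> 0" "\<not> agree_at m n j" by blast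
    then obtain i where i: "j \<le> i" "i \<le> 0" "\<not> agree_at m n i" "\<forall>l. i < l \<longrightarrow> l \<le> 0 \<longrightarrow> agree_at m n l"
      using int_greatest[of j 0 "agree_at m n"] by blast
    have i0: "i < 0" using i agree0[OF gm gn] by (cases "i = 0") auto
    have ik: "k < i" using i \<open>k < j\<close> by simp
    have im: "i \<in> fst m" "snd m i = snd q i" "i \<in> fst q" using agree_D[OF agq[of i]] i ik by auto
    have inn: "i \<in> fst n" using L1[OF gm gn i0 im(1)] i by blast
    have ne: "snd m i \<noteq> snd n i" using i(3) im inn agree_I by blast
    have "split_at m n i" using splitL_intro[OF i0 im(1) inn ne] i by blast
    hence d: "snd (snd m i)" "\<not> snd (snd n i)" using cc_dir[OF mn] by auto
    have "\<forall>l. i < l \<and> l \<le> 0 \<longrightarrow> agree_at n q l" using i(4) agq ik agree_sym agree_trans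
      by (meson less_trans)
    hence "split_at n q i" using splitL_intro[OF i0 inn im(3)] ne im(2) by simp
    then show ?thesis using cc_dir[OF nq] d by simp
  qed
qed

lemma RE:
  assumes gm: "good Ab s t Rb \<alpha> m" and gn: "good Ab s t Rb \<alpha> n" and gq: "good Ab s t Rb \<alpha> q"
    and mn: "cc_less m n" and nq: "cc_less n q" and sp: "split_at m n a" and a: "0 < a"
  shows "\<exists>k. split_at m q k"
proof (cases "\<forall>j. 0 \<le> j \<and> j \<le> a \<longrightarrow> agree_at m q j")
  case True
  have ad: "a \<in> fst m" "a \<in> fst n" "snd m a \<noteq> snd n a" using split_D[OF sp] by auto
  have aq: "a \<in> fst q" "snd m a = snd q a" using agree_D[of m q a] True a by auto
  have "\<forall>j. 0 \<le> j \<and> j < a \<longrightarrow> agree_at n q j"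
    using True splitR_ag[OF sp a] agree_sym agree_trans by (meson less_imp_le)
  hence "split_at n q a" using splitR_intro[OF a ad(2) aq(1)] ad aq by simp
  hence "snd (snd n a)" using cc_dir[OF nq] by simp
  moreover have "\<not> snd (snd n a)" using cc_dir[OF mn sp] by simp
  ultimately show ?thesis by simp
next
  case False
  then obtain j where "0 \<le> j" "j \<le> a" "\<not> agree_at m q j" by blast
  then obtain i where i: "0 \<le> i" "i \<le> j" "\<not> agree_at m q i" "\<forall>l. 0 \<le> l \<longrightarrow> l < i \<longrightarrow> agree_at m q l"
    using int_least[of 0 j "agree_at m q"] by blast
  have i0: "0 < i" using i agree0[OF gm gq] by (cases "i = 0") auto
  have im: "i \<in> fst m" using good_int[OF gm good_0[OF gm] _ _ ] split_D[OF sp] i \<open>j \<le> a\<close> by auto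
  have iq: "i \<in> fst q" using R1[OF gm gq i0 im] i by blast
  have "split_at m q i" using splitR_intro[OF i0 im iq] i(3) i(4) im iq agree_I by blast
  thus ?thesis by blast
qed

lemma RE2:
  assumes gm: "good Ab s t Rb \<alpha> m" and gn: "good Ab s t Rb \<alpha> n" and gq: "good Ab s t Rb \<alpha> q"
    and mn: "cc_less m n" and nq: "cc_less n q" and sp: "split_at n q a" and a: "0 < a"
  shows "\<exists>k. split_at m q k"
proof (cases "\<forall>j. 0 \<le> j \<and> j \<le> a \<longrightarrow> agree_at m q j")
  case True
  have ad: "a \<in> fst n" "a \<in> fst q" "snd n a \<noteq> snd q a" using split_D[OF sp] by auto
  have aq: "a \<in> fst m" "snd m a = snd q a" using agree_D[of m q a] True a by auto
  have "\<forall>j. 0 \<le> j \<and> j < a \<longrightarrow> agree_at m n j"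
    using True splitR_ag[OF sp a] agree_sym agree_trans by (meson less_le)
  hence "split_at m n a" using splitR_intro[OF a aq(1) ad(1)] ad aq by simp
  hence "\<not> snd (snd n a)" using cc_dir[OF mn] by simp
  moreover have "snd (snd n a)" using cc_dir[OF nq sp] by simp
  ultimately show ?thesis by simp
next
  case False
  then obtain j where "0 \<le> j" "j \<le> a" "\<not> agree_at m q j" by blast
  then obtain i where i: "0 \<le> i" "i \<le> j" "\<not> agree_at m q i" "\<forall>l. 0 \<le> l \<longrightarrow> l < i \<longrightarrow> agree_at m q l"
    using int_least[of 0 j "agree_at m q"] by blast
  have i0: "0 < i" using i agree0[OF gm gq] by (cases "i = 0") auto
  have iq: "i \<in> fst q" using good_int[OF gq good_0[OF gq] _ _ ] split_D[OF sp] i \<open>j \<le> a\<close> by auto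
  have im: "i \<in> fst m" using R1[OF gq gm i0 iq] i agree_sym by blast
  have "split_at m q i" using splitR_intro[OF i0 im iq] i(3) i(4) im iq agree_I by blast
  thus ?thesis by blast
qed

lemma LE:
  assumes gm: "good Ab s t Rb \<alpha> m" and gn: "good Ab s t Rb \<alpha> n" and gq: "good Ab s t Rb \<alpha> q"
    and mn: "cc_less m n" and nq: "cc_less n q" and sp: "split_at m n a" and a: "a < 0"
  shows "\<exists>k. split_at m q k"
proof (cases "\<forall>j. a \<le> j \<and> j \<le> 0 \<longrightarrow> agree_at m q j")
  case True
  have ad: "a \<in> fst m" "a \<in> fst n" "snd m a \<noteq> snd n a" using split_D[OF sp] by auto
  have aq: "a \<in> fst q" "snd m a = snd q a" using agree_D[of m q a] True a by auto
  have "\<forall>j. a < j \<and> j \<le> 0 \<longrightarrow> agree_at n q j"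
    using True splitL_ag[OF sp a] agree_sym agree_trans by (meson less_imp_le)
  hence "split_at n q a" using splitL_intro[OF a ad(2) aq(1)] ad aq by simp
  hence "snd (snd n a)" using cc_dir[OF nq] by simp
  moreover have "\<not> snd (snd n a)" using cc_dir[OF mn sp] by simp
  ultimately show ?thesis by simp
next
  case False
  then obtain j where "a \<le> j" "j \<le> 0" "\<not> agree_at m q j" by blast
  then obtain i where i: "j \<le> i" "i \<le> 0" "\<not> agree_at m q i" "\<forall>l. i < l \<longrightarrow> l \<le> 0 \<longrightarrow> agree_at m q l"
    using int_greatest[of j 0 "agree_at m q"] by blast
  have i0: "i < 0" using i agree0[OF gm gq] by (cases "i = 0") auto
  have im: "i \<in> fst m" using good_int[OF gm _ good_0[OF gm]] split_D[OF sp] i \<open>a \<le> j\<close> by auto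
  have iq: "i \<in> fst q" using L1[OF gm gq i0 im] i by blast
  have "split_at m q i" using splitL_intro[OF i0 im iq] i(3) i(4) im iq agree_I by blast
  thus ?thesis by blast
qed

lemma LE2:
  assumes gm: "good Ab s t Rb \<alpha> m" and gn: "good Ab s t Rb \<alpha> n" and gq: "good Ab s t Rb \<alpha> q"
    and mn: "cc_less m n" and nq: "cc_less n q" and sp: "split_at n q a" and a: "a < 0"
  shows "\<exists>k. split_at m q k"
proof (cases "\<forall>j. a \<le> j \<and> j \<le> 0 \<longrightarrow> agree_at m q j")
  case True
  have ad: "a \<in> fst n" "a \<in> fst q" "snd n a \<noteq> snd q a" using split_D[OF sp] by auto
  have aq: "a \<in> fst m" "snd m a = snd q a" using agree_D[of m q a] True a by auto
  have "\<forall>j. a < j \<and> j \<le> 0 \<longrightarrow> agree_at m n j"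
    using True splitL_ag[OF sp a] agree_sym agree_trans by (meson less_le)
  hence "split_at m n a" using splitL_intro[OF a aq(1) ad(1)] ad aq by simp
  hence "\<not> snd (snd n a)" using cc_dir[OF mn] by simp
  moreover have "snd (snd n a)" using cc_dir[OF nq sp] by simp
  ultimately show ?thesis by simp
next
  case False
  then obtain j where "a \<le> j" "j \<le> 0" "\<not> agree_at m q j" by blast
  then obtain i where i: "j \<le> i" "i \<le> 0" "\<not> agree_at m q i" "\<forall>l. i < l \<longrightarrow> l \<le> 0 \<longrightarrow> agree_at m q l"
    using int_greatest[of j 0 "agree_at m q"] by blast
  have i0: "i < 0" using i agree0[OF gm gq] by (cases "i = 0") auto
  have iq: "i \<in> fst q" using good_int[OF gq _ good_0[OF gq]] split_D[OF sp] i \<open>a \<le> j\<close> by auto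
  have im: "i \<in> fst m" using L1[OF gq gm i0 iq] i agree_sym by blast
  have "split_at m q i" using splitL_intro[OF i0 im iq] i(3) i(4) im iq agree_I by blast
  thus ?thesis by blast
qed

lemma straight_no:
  assumes lg: "locally_gentle Vb Ab s t Rb"
    and gm: "good Ab s t Rb \<alpha> m" and gq: "good Ab s t Rb \<alpha> q" and sp: "split_at m q k"
  shows "\<not> straight_same m q"
proof
  assume st: "straight_same m q"
  then have D: "fst m = UNIV" "fst q = UNIV" and dm: "\<forall>k. snd (snd m k)"
    unfolding straight_same_def by auto
  from st obtain d where d: "\<forall>k. snd q k = snd m (k + d)" unfolding straight_same_def by auto
  have dq: "\<forall>k. snd (snd q k)" using d dm by simp
  have up: "snd m (int i) = snd q (int i)" for i
  proof (induction i)
    case 0 then show ?case using good_at0[OF gm] good_at0[OF gq] by simp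
  next
    case (Suc i)
    have "ok_pair Ab s t Rb (snd m (int i)) (snd m (int i + 1))" using good_ok[OF gm] D by simp
    moreover have "ok_pair Ab s t Rb (snd m (int i)) (snd q (int i + 1))" using good_ok[OF gq] D Suc by simp
    ultimately have "snd m (int i + 1) = snd q (int i + 1)" using UDf[OF lg] dm dq by blast
    then show ?case by (simp add: add.commute)
  qed
  have down: "snd m (- int i) = snd q (- int i)" for i
  proof (induction i)
    case 0 then show ?case using good_at0[OF gm] good_at0[OF gq] by simp
  next
    case (Suc i)
    have "ok_pair Ab s t Rb (snd m (- int i - 1)) (snd m (- int i - 1 + 1))" using good_ok[OF gm, of "- int i - 1"] D by simp
    moreover have "ok_pair Ab s t Rb (snd q (- int i - 1)) (snd m (- int i - 1 + 1))"
      using good_ok[OF gq, of "- int i - 1"] D Suc by simp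
    ultimately have "snd m (- int i - 1) = snd q (- int i - 1)" using UDb[OF lg] dm dq by blast
    moreover have "- int (Suc i) = - int i - 1" by simp
    ultimately show ?case by metis
  qed
  have "snd m k = snd q k"
  proof (cases "0 \<le> k")
    case True then show ?thesis using up[of "nat k"] by simp
  next
    case False then show ?thesis using down[of "nat (- k)"] by simp
  qed
  then show False using split_D[OF sp] by simp
qed

lemma cc_trans:
  assumes lg: "locally_gentle Vb Ab s t Rb"
    and gm: "good Ab s t Rb \<alpha> m" and gn: "good Ab s t Rb \<alpha> n" and gq: "good Ab s t Rb \<alpha> q"
    and mn: "cc_less m n" and nq: "cc_less n q"
  shows "cc_less m q"
proof -
  obtain a where a: "split_at m n a" using cc_ex[OF mn] by blast
  have ex: "\<exists>k. split_at m q k"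
  proof (cases "0 < a")
    case True then show ?thesis using RE[OF gm gn gq mn nq a] by blast
  next
    case False
    then have "a < 0" using split_D[OF a] by auto
    then show ?thesis using LE[OF gm gn gq mn nq a] by blast
  qed
  then obtain k where k: "split_at m q k" by blast
  have dir: "\<forall>k. split_at m q k \<longrightarrow> snd (snd m k) \<and> \<not> snd (snd q k)"
  proof (intro allI impI)
    fix k assume k: "split_at m q k"
    show "snd (snd m k) \<and> \<not> snd (snd q k)"
    proof (cases "0 < k")
      case True then show ?thesis using RA[OF gm gn gq mn nq k] by blast
    next
      case False
      then have "k < 0" using split_D[OF k] by auto
      then show ?thesis using LA[OF gm gn gq mn nq k] by blast
    qed
  qed
  show ?thesis unfolding cc_less_def using straight_no[OF lg gm gq k] ex dir by blast
qed

lemma cc_irrefl: "\<not> cc_less m m"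
  unfolding cc_less_def split_at_def by auto

lemma walk_str: "is_walk Ab s t Rb w \<Longrightarrow> is_string Ab s t Rb w"
  unfolding is_walk_def by simp
lemma walk_ne: "is_walk Ab s t Rb w \<Longrightarrow> fst w \<noteq> {}"
  by (drule walk_str) (simp add: is_string_def)
lemma walk_int: "is_walk Ab s t Rb w \<Longrightarrow> a \<in> fst w \<Longrightarrow> c \<in> fst w \<Longrightarrow> a \<le> b \<Longrightarrow> b \<le> c \<Longrightarrow> b \<in> fst w"
proof -
  assume "is_walk Ab s t Rb w" "a \<in> fst w" "c \<in> fst w" "a \<le> b" "b \<le> c"
  then have "is_interval (fst w)" using walk_str is_string_def by blast
  then show "b \<in> fst w" unfolding is_interval_def using \<open>a \<in> fst w\<close> \<open>c \<in> fst w\<close> \<open>a \<le> b\<close> \<open>b \<le> c\<close> by blast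
qed
lemma walk_Ab: "is_walk Ab s t Rb w \<Longrightarrow> l \<in> fst w \<Longrightarrow> fst (snd w l) \<in> Ab"
  by (drule walk_str) (simp add: is_string_def)
lemma walk_ok: "is_walk Ab s t Rb w \<Longrightarrow> l \<in> fst w \<Longrightarrow> l + 1 \<in> fst w \<Longrightarrow> ok_pair Ab s t Rb (snd w l) (snd w (l + 1))"
  by (drule walk_str) (simp add: is_string_def)
lemma walk_rmax0: assumes "is_walk Ab s t Rb w" "h \<in> fst w" "\<forall>l\<in>fst w. l \<le> h" shows "\<not> ok_pair Ab s t Rb (snd w h) x"
proof -
  have "\<forall>h\<in>fst w. (\<forall>l\<in>fst w. l \<le> h) \<longrightarrow> \<not> (\<exists>x. ok_pair Ab s t Rb (snd w h) x)"
    using assms(1) unfolding is_walk_def by (elim conjE) assumption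
  then show ?thesis using assms(2,3) by blast
qed
lemma walk_lmax0: assumes "is_walk Ab s t Rb w" "h \<in> fst w" "\<forall>l\<in>fst w. h \<le> l" shows "\<not> ok_pair Ab s t Rb x (snd w h)"
proof -
  have "\<forall>h\<in>fst w. (\<forall>l\<in>fst w. h \<le> l) \<longrightarrow> \<not> (\<exists>x. ok_pair Ab s t Rb x (snd w h))"
    using assms(1) unfolding is_walk_def by (elim conjE) assumption
  then show ?thesis using assms(2,3) by blast
qed
lemma walk_rmax: assumes "is_walk Ab s t Rb w" "h \<in> fst w" "h + 1 \<notin> fst w"
  shows "\<not> ok_pair Ab s t Rb (snd w h) x"
proof -
  have "\<forall>l\<in>fst w. l \<le> h"
  proof
    fix l assume "l \<in> fst w"
    show "l \<le> h"
    proof (rule ccontr)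
      assume "\<not> l \<le> h"
      then have "h + 1 \<in> fst w" using walk_int[OF assms(1) assms(2) \<open>l \<in> fst w\<close>] by simp
      then show False using assms by simp
    qed
  qed
  then show ?thesis using walk_rmax0[OF assms(1,2)] by blast
qed
lemma walk_lmax: assumes "is_walk Ab s t Rb w" "h \<in> fst w" "h - 1 \<notin> fst w"
  shows "\<not> ok_pair Ab s t Rb x (snd w h)"
proof -
  have "\<forall>l\<in>fst w. h \<le> l"
  proof
    fix l assume "l \<in> fst w"
    show "h \<le> l"
    proof (rule ccontr)
      assume "\<not> h \<le> l"
      then have "h - 1 \<in> fst w" using walk_int[OF assms(1) \<open>l \<in> fst w\<close> assms(2)] by simp
      then show False using assms by simp
    qed
  qed
  then show ?thesis using walk_lmax0[OF assms(1,2)] by blast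
qed
lemma walk_rtail: "is_walk Ab s t Rb w \<Longrightarrow> (\<exists>h\<in>fst w. \<forall>l\<in>fst w. l \<le> h) \<or>
      (\<exists>N p. p > 0 \<and> {N..} \<subseteq> fst w \<and>
         (\<forall>l\<ge>N. snd w (l + p) = snd w l \<and> snd (snd w l) = snd (snd w N)))"
  unfolding is_walk_def by (elim conjE) assumption
lemma walk_ltail: "is_walk Ab s t Rb w \<Longrightarrow> (\<exists>h\<in>fst w. \<forall>l\<in>fst w. h \<le> l) \<or>
      (\<exists>N p. p > 0 \<and> {..N} \<subseteq> fst w \<and>
         (\<forall>l\<le>N. snd w (l - p) = snd w l \<and> snd (snd w l) = snd (snd w N)))"
  unfolding is_walk_def by (elim conjE) assumption

lemma good_wshift:
  assumes w: "is_walk Ab s t Rb w" and p: "p \<in> fst w" "snd w p = (\<alpha>, True)"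
  shows "good Ab s t Rb \<alpha> (wshift w p)"
  unfolding good_def
proof (intro conjI allI impI)
  show "0 \<in> fst (wshift w p)" using p by simp
  show "is_interval (fst (wshift w p))" unfolding is_interval_def
  proof (intro allI impI)
    fix a b c assume "a \<in> fst (wshift w p)" "c \<in> fst (wshift w p)" "a \<le> b" "b \<le> c"
    then show "b \<in> fst (wshift w p)" using walk_int[OF w, of "p + a" "p + c" "p + b"] by simp
  qed
  show "snd (wshift w p) 0 = (\<alpha>, True)" using p by simp
  fix l assume "l \<in> fst (wshift w p)" "l + 1 \<in> fst (wshift w p)"
  then show "ok_pair Ab s t Rb (snd (wshift w p) l) (snd (wshift w p) (l + 1))"
    using walk_ok[OF w, of "p + l"] by (simp add: add.assoc)
next
  fix h x assume "h \<in> fst (wshift w p)" "h + 1 \<notin> fst (wshift w p)"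
  then show "\<not> ok_pair Ab s t Rb (snd (wshift w p) h) x"
    using walk_rmax[OF w, of "p + h"] by (simp add: add.assoc)
next
  fix h x assume "h \<in> fst (wshift w p)" "h - 1 \<notin> fst (wshift w p)"
  then show "\<not> ok_pair Ab s t Rb x (snd (wshift w p) h)"
    using walk_lmax[OF w, of "p + h"] by (simp add: add_diff_eq)
qed

lemma walk_wrev:
  assumes w: "is_walk Ab s t Rb w"
  shows "is_walk Ab s t Rb (wrev w)"
  unfolding is_walk_def is_string_def
proof (intro conjI)
  show "fst (wrev w) \<noteq> {}" using walk_ne[OF w] by (auto simp: wrev_def)
  show "is_interval (fst (wrev w))" unfolding is_interval_def
  proof (intro allI impI)
    fix a b c assume "a \<in> fst (wrev w)" "c \<in> fst (wrev w)" "a \<le> b" "b \<le> c"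
    then show "b \<in> fst (wrev w)" using walk_int[OF w, of "- c" "- a" "- b"] by simp
  qed
  show "\<forall>l\<in>fst (wrev w). fst (snd (wrev w) l) \<in> Ab" using walk_Ab[OF w] by simp
  show "\<forall>l. l \<in> fst (wrev w) \<longrightarrow> l + 1 \<in> fst (wrev w) \<longrightarrow> ok_pair Ab s t Rb (snd (wrev w) l) (snd (wrev w) (l + 1))"
  proof (intro allI impI)
    fix l assume "l \<in> fst (wrev w)" "l + 1 \<in> fst (wrev w)"
    then have "ok_pair Ab s t Rb (snd w (- l - 1)) (snd w (- l - 1 + 1))"
      using walk_ok[OF w, of "- l - 1"] by simp
    then have "ok_pair Ab s t Rb (linv (snd w (- l))) (linv (snd w (- l - 1)))"
      using ok_pair_rev by (metis diff_add_cancel)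
    moreover have "- (l + 1) = - l - 1" by simp
    ultimately show "ok_pair Ab s t Rb (snd (wrev w) l) (snd (wrev w) (l + 1))"
      by simp
  qed
  show "\<forall>h\<in>fst (wrev w). (\<forall>l\<in>fst (wrev w). l \<le> h) \<longrightarrow> \<not> (\<exists>x. ok_pair Ab s t Rb (snd (wrev w) h) x)"
  proof (intro ballI impI notI)
    fix h assume h: "h \<in> fst (wrev w)" "\<forall>l\<in>fst (wrev w). l \<le> h" "\<exists>x. ok_pair Ab s t Rb (snd (wrev w) h) x"
    then obtain x where "ok_pair Ab s t Rb (linv (snd w (- h))) x" by auto
    then have "ok_pair Ab s t Rb (linv x) (linv (linv (snd w (- h))))" by (rule ok_pair_rev)
    then have "ok_pair Ab s t Rb (linv x) (snd w (- h))" by simp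
    moreover have "\<forall>l\<in>fst w. - h \<le> l"
    proof
      fix l assume "l \<in> fst w"
      then have "- l \<in> fst (wrev w)" by simp
      then show "- h \<le> l" using bspec[OF h(2), of "- l"] by linarith
    qed
    ultimately show False using walk_lmax0[OF w, of "- h"] h(1) by simp
  qed
  show "\<forall>h\<in>fst (wrev w). (\<forall>l\<in>fst (wrev w). h \<le> l) \<longrightarrow> \<not> (\<exists>x. ok_pair Ab s t Rb x (snd (wrev w) h))"
  proof (intro ballI impI notI)
    fix h assume h: "h \<in> fst (wrev w)" "\<forall>l\<in>fst (wrev w). h \<le> l" "\<exists>x. ok_pair Ab s t Rb x (snd (wrev w) h)"
    then obtain x where "ok_pair Ab s t Rb x (linv (snd w (- h)))" by auto
    then have "ok_pair Ab s t Rb (linv (linv (snd w (- h)))) (linv x)" by (rule ok_pair_rev)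
    then have "ok_pair Ab s t Rb (snd w (- h)) (linv x)" by simp
    moreover have "\<forall>l\<in>fst w. l \<le> - h"
    proof
      fix l assume "l \<in> fst w"
      then have "- l \<in> fst (wrev w)" by simp
      then show "l \<le> - h" using bspec[OF h(2), of "- l"] by linarith
    qed
    ultimately show False using walk_rmax0[OF w, of "- h"] h(1) by simp
  qed
  show "(\<exists>h\<in>fst (wrev w). \<forall>l\<in>fst (wrev w). l \<le> h) \<or>
    (\<exists>N p. 0 < p \<and> {N..} \<subseteq> fst (wrev w) \<and>
       (\<forall>l\<ge>N. snd (wrev w) (l + p) = snd (wrev w) l \<and> snd (snd (wrev w) l) = snd (snd (wrev w) N)))"
  proof (cases "\<exists>h\<in>fst w. \<forall>l\<in>fst w. h \<le> l")
    case True
    then obtain h where h: "h \<in> fst w" "\<forall>l\<in>fst w. h \<le> l" by blast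
    have "\<forall>l\<in>fst (wrev w). l \<le> - h"
    proof
      fix l assume "l \<in> fst (wrev w)"
      then have "- l \<in> fst w" by simp
      then show "l \<le> - h" using bspec[OF h(2), of "- l"] by linarith
    qed
    moreover have "- h \<in> fst (wrev w)" using h by simp
    ultimately show ?thesis by blast
  next
    case False
    then obtain N p where Np: "p > 0" "{..N} \<subseteq> fst w"
      "\<forall>l\<le>N. snd w (l - p) = snd w l \<and> snd (snd w l) = snd (snd w N)"
      using walk_ltail[OF w] by blast
    have "{- N..} \<subseteq> fst (wrev w)"
    proof
      fix x assume "x \<in> {- N..}"
      then have "- x \<in> {..N}" by simp
      then show "x \<in> fst (wrev w)" using Np(2) by auto
    qed
    moreover have "\<forall>l\<ge>- N. snd (wrev w) (l + p) = snd (wrev w) l \<and> snd (snd (wrev w) l) = snd (snd (wrev w) (- N))"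
    proof (intro allI impI)
      fix l :: int assume "- N \<le> l"
      then have "- l \<le> N" by simp
      then have "snd w (- l - p) = snd w (- l) \<and> snd (snd w (- l)) = snd (snd w N)" using Np(3) by blast
      moreover have "- (l + p) = - l - p" by simp
      ultimately show "snd (wrev w) (l + p) = snd (wrev w) l \<and> snd (snd (wrev w) l) = snd (snd (wrev w) (- N))"
        by simp
    qed
    ultimately show ?thesis using Np(1) by blast
  qed
  show "(\<exists>h\<in>fst (wrev w). \<forall>l\<in>fst (wrev w). h \<le> l) \<or>
    (\<exists>N p. 0 < p \<and> {..N} \<subseteq> fst (wrev w) \<and>
       (\<forall>l\<le>N. snd (wrev w) (l - p) = snd (wrev w) l \<and> snd (snd (wrev w) l) = snd (snd (wrev w) N)))"
  proof (cases "\<exists>h\<in>fst w. \<forall>l\<in>fst w. l \<le> h")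
    case True
    then obtain h where h: "h \<in> fst w" "\<forall>l\<in>fst w. l \<le> h" by blast
    have "\<forall>l\<in>fst (wrev w). - h \<le> l"
    proof
      fix l assume "l \<in> fst (wrev w)"
      then have "- l \<in> fst w" by simp
      then show "- h \<le> l" using bspec[OF h(2), of "- l"] by linarith
    qed
    moreover have "- h \<in> fst (wrev w)" using h by simp
    ultimately show ?thesis by blast
  next
    case False
    then obtain N p where Np: "p > 0" "{N..} \<subseteq> fst w"
      "\<forall>l\<ge>N. snd w (l + p) = snd w l \<and> snd (snd w l) = snd (snd w N)"
      using walk_rtail[OF w] by blast
    have "{..- N} \<subseteq> fst (wrev w)"
    proof
      fix x assume "x \<in> {..- N}"
      then have "- x \<in> {N..}" by simp
      then show "x \<in> fst (wrev w)" using Np(2) by auto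
    qed
    moreover have "\<forall>l\<le>- N. snd (wrev w) (l - p) = snd (wrev w) l \<and> snd (snd (wrev w) l) = snd (snd (wrev w) (- N))"
    proof (intro allI impI)
      fix l :: int assume "l \<le> - N"
      then have "N \<le> - l" by simp
      then have "snd w (- l + p) = snd w (- l) \<and> snd (snd w (- l)) = snd (snd w N)" using Np(3) by blast
      moreover have "- (l - p) = - l + p" by simp
      ultimately show "snd (wrev w) (l - p) = snd (wrev w) l \<and> snd (snd (wrev w) l) = snd (snd (wrev w) (- N))"
        by simp
    qed
    ultimately show ?thesis using Np(1) by blast
  qed
qed

lemma good_mnorm:
  assumes w: "is_walk Ab s t Rb w" and p: "p \<in> fst w" "fst (snd w p) = \<alpha>"
  shows "good Ab s t Rb \<alpha> (mnorm w p)"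
proof (cases "snd (snd w p)")
  case True
  then have "snd w p = (\<alpha>, True)" using p by (simp add: prod_eq_iff)
  then show ?thesis using good_wshift[OF w p(1)] True by (simp add: mnorm_def)
next
  case False
  then have "snd (wrev w) (- p) = (\<alpha>, True)" using p by (simp add: prod_eq_iff)
  moreover have "- p \<in> fst (wrev w)" using p by simp
  ultimately show ?thesis using good_wshift[OF walk_wrev[OF w]] False by (simp add: mnorm_def)
qed

lemma TR:
  assumes lg: "locally_gentle Vb Ab s t Rb" and w: "is_walk Ab s t Rb w"
    and P: "0 < P" and sub: "{N..} \<subseteq> fst w"
    and per: "\<forall>l\<ge>N. snd w (l + P) = snd w l \<and> snd (snd w l) = snd (snd w N)"
    and dN: "snd (snd w N)" and p: "N \<le> p"
  shows "wshift w (p + P) = wshift w p \<or> cc_less (wshift w (p + P)) (wshift w p)"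
proof -
  define Q where "Q i \<longleftrightarrow> i \<in> fst w \<and> snd w i = snd w (i + P)" for i
  have inD: "i \<in> fst w" if "N \<le> i" for i using sub that by auto
  have perN: "snd w (i + P) = snd w i" if "N \<le> i" for i using per that by blast
  show ?thesis
  proof (cases "\<forall>j\<le>p. Q j")
    case True
    have allD: "i \<in> fst w" for i
    proof (cases "i \<le> p")
      case True then show ?thesis using \<open>\<forall>j\<le>p. Q j\<close> Q_def by blast
    next
      case False then show ?thesis using inD p by simp
    qed
    have allP: "snd w (i + P) = snd w i" for i
    proof (cases "i \<le> p")
      case True then show ?thesis using \<open>\<forall>j\<le>p. Q j\<close> Q_def by metis
    next
      case False then show ?thesis using perN p by simp
    qed
    have "fst (wshift w (p + P)) = fst (wshift w p)" using allD by (auto simp: set_eq_iff)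
    moreover have "snd (wshift w (p + P)) = snd (wshift w p)"
    proof
      fix k show "snd (wshift w (p + P)) k = snd (wshift w p) k"
        using allP[of "p + k"] by (simp add: algebra_simps)
    qed
    ultimately show ?thesis by (simp add: prod_eq_iff)
  next
    case False
    then obtain j where "j \<le> p" "\<not> Q j" by blast
    then obtain j0 where j0: "j0 \<le> p" "\<not> Q j0" "\<forall>l. j0 < l \<longrightarrow> l \<le> p \<longrightarrow> Q l"
      using int_greatest[of j p Q] by blast
    have Qp: "Q p" unfolding Q_def using inD[OF p] perN[OF p] by simp
    have j0p: "j0 < p" using j0 Qp by (cases "j0 = p") auto
    have pP: "p + P \<in> fst w" using inD p P by simp
    have Q1: "Q (j0 + 1)" using j0 j0p by simp
    hence j1D: "j0 + 1 \<in> fst w" and j1eq: "snd w (j0 + 1) = snd w (j0 + 1 + P)" unfolding Q_def by auto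
    have jPD: "j0 + P \<in> fst w" using walk_int[OF w j1D pP, of "j0 + P"] P j0p by simp
    have j1PD: "j0 + P + 1 \<in> fst w" using walk_int[OF w j1D pP, of "j0 + P + 1"] P j0p by simp
    have okP: "ok_pair Ab s t Rb (snd w (j0 + P)) (snd w (j0 + 1))"
      using walk_ok[OF w jPD j1PD] j1eq by (simp add: algebra_simps)
    have j0D: "j0 \<in> fst w"
    proof (rule ccontr)
      assume "j0 \<notin> fst w"
      then have "\<not> ok_pair Ab s t Rb (snd w (j0 + P)) (snd w (j0 + 1))"
        using walk_lmax[OF w j1D] by simp
      then show False using okP by simp
    qed
    have ne: "snd w j0 \<noteq> snd w (j0 + P)" using j0(2) j0D Q_def by blast
    have sgn: "\<forall>i. j0 < i \<longrightarrow> nat (N - i) \<le> n \<longrightarrow> snd (snd w i)" for n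
    proof (induction n)
      case 0
      show ?case
      proof (intro allI impI)
        fix i assume "j0 < i" "nat (N - i) \<le> 0"
        then have "N \<le> i" by simp
        then show "snd (snd w i)" using per dN by blast
      qed
    next
      case (Suc n)
      show ?case
      proof (intro allI impI)
        fix i assume i: "j0 < i" "nat (N - i) \<le> Suc n"
        show "snd (snd w i)"
        proof (cases "N \<le> i")
          case True then show ?thesis using per dN by blast
        next
          case False
          then have "i \<le> p" using p by simp
          then have "snd w i = snd w (i + P)" using j0(3) i Q_def by blast
          moreover have "snd (snd w (i + P))" using Suc.IH i P by simp
          ultimately show ?thesis by simp
        qed
      qed
    qed
    have dP: "snd (snd w (j0 + P))" using sgn[of "nat (N - (j0 + P))"] P by simp
    have ok0: "ok_pair Ab s t Rb (snd w j0) (snd w (j0 + 1))" using walk_ok[OF w j0D j1D] .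
    have nd: "\<not> snd (snd w j0)"
    proof
      assume "snd (snd w j0)"
      then have "snd w j0 = snd w (j0 + P)" using UDb[OF lg ok0 okP] dP by blast
      then show False using ne by simp
    qed
    define k0 where "k0 = j0 - p"
    have k0: "k0 < 0" using j0p k0_def by simp
    let ?m = "wshift w p" and ?m' = "wshift w (p + P)"
    have e1: "p + P + k0 = j0 + P" "p + k0 = j0" using k0_def by simp_all
    have agr: "\<forall>j. k0 < j \<and> j \<le> 0 \<longrightarrow> agree_at ?m' ?m j"
    proof (intro allI impI)
      fix j assume jj: "k0 < j \<and> j \<le> 0"
      then have "Q (p + j)" using j0(3) k0_def by simp
      then have a: "p + j \<in> fst w" "snd w (p + j) = snd w (p + j + P)" unfolding Q_def by auto
      have "p + j + P \<in> fst w" using walk_int[OF w a(1) pP, of "p + j + P"] jj P by simp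
      then show "agree_at ?m' ?m j" using a by (intro agree_I) (simp_all add: algebra_simps)
    qed
    have sp0: "split_at ?m' ?m k0"
      using splitL_intro[OF k0 _ _ _ agr] e1 jPD j0D ne by (simp add: algebra_simps)
    have nst: "\<not> straight_same ?m' ?m"
    proof
      assume "straight_same ?m' ?m"
      then obtain d where "\<forall>k. snd (snd ?m' k)" "\<forall>k. snd ?m k = snd ?m' (k + d)"
        unfolding straight_same_def by blast
      then have "snd (snd ?m k0)" by metis
      then show False using nd e1 by simp
    qed
    have dirs: "\<forall>k. split_at ?m' ?m k \<longrightarrow> snd (snd ?m' k) \<and> \<not> snd (snd ?m k)"
    proof (intro allI impI)
      fix k assume sk: "split_at ?m' ?m k"
      have kk: "k \<noteq> 0" "snd ?m' k \<noteq> snd ?m k" using split_D[OF sk] by auto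
      have "k = k0"
      proof (rule ccontr)
        assume "k \<noteq> k0"
        show False
        proof (cases "0 < k")
          case True
          then have "snd w (p + k + P) = snd w (p + k)" using perN[of "p + k"] p by simp
          then show False using kk by (simp add: algebra_simps)
        next
          case False
          then have kn: "k < 0" using kk by simp
          show False
          proof (cases "k0 < k")
            case True
            then have "Q (p + k)" using j0(3) k0_def kn by simp
            then show False using kk unfolding Q_def by (simp add: algebra_simps)
          next
            case False
            then have "k < k0" using \<open>k \<noteq> k0\<close> by simp
            then have "agree_at ?m' ?m k0" using splitL_ag[OF sk kn, of k0] k0 by simp
            then show False using agree_D[of ?m' ?m k0] e1 ne by simp
          qed
        qed
      qed
      moreover have "snd ?m' k0 = snd w (j0 + P)" "snd ?m k0 = snd w j0" by (simp only: wshift_snd e1)+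
      ultimately show "snd (snd ?m' k) \<and> \<not> snd (snd ?m k)" using dP nd by simp
    qed
    show ?thesis unfolding cc_less_def using nst sp0 dirs by blast
  qed
qed

lemma TL:
  assumes lg: "locally_gentle Vb Ab s t Rb" and w: "is_walk Ab s t Rb w"
    and P: "0 < P" and sub: "{..N} \<subseteq> fst w"
    and per: "\<forall>l\<le>N. snd w (l - P) = snd w l \<and> snd (snd w l) = snd (snd w N)"
    and dN: "snd (snd w N)" and p: "p \<le> N"
  shows "wshift w (p - P) = wshift w p \<or> cc_less (wshift w (p - P)) (wshift w p)"
proof -
  define Q where "Q i \<longleftrightarrow> i \<in> fst w \<and> snd w i = snd w (i - P)" for i
  have inD: "i \<in> fst w" if "i \<le> N" for i using sub that by auto
  have perN: "snd w (i - P) = snd w i" if "i \<le> N" for i using per that by blast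
  show ?thesis
  proof (cases "\<forall>j\<ge>p. Q j")
    case True
    have allD: "i \<in> fst w" for i
    proof (cases "p \<le> i")
      case True then show ?thesis using \<open>\<forall>j\<ge>p. Q j\<close> Q_def by blast
    next
      case False then show ?thesis using inD p by simp
    qed
    have allP: "snd w (i - P) = snd w i" for i
    proof (cases "p \<le> i")
      case True then show ?thesis using \<open>\<forall>j\<ge>p. Q j\<close> Q_def by metis
    next
      case False then show ?thesis using perN p by simp
    qed
    have "fst (wshift w (p - P)) = fst (wshift w p)" using allD by (auto simp: set_eq_iff)
    moreover have "snd (wshift w (p - P)) = snd (wshift w p)"
    proof
      fix k show "snd (wshift w (p - P)) k = snd (wshift w p) k"
        using allP[of "p + k"] by (simp add: algebra_simps)
    qed
    ultimately show ?thesis by (simp add: prod_eq_iff)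
  next
    case False
    then obtain j where "p \<le> j" "\<not> Q j" by blast
    then obtain j0 where j0: "p \<le> j0" "\<not> Q j0" "\<forall>l. p \<le> l \<longrightarrow> l < j0 \<longrightarrow> Q l"
      using int_least[of p j Q] by blast
    have Qp: "Q p" unfolding Q_def using inD[OF p] perN[OF p] by simp
    have j0p: "p < j0" using j0 Qp by (cases "j0 = p") auto
    have pP: "p - P \<in> fst w" using inD p P by simp
    have Q1: "Q (j0 - 1)" using j0 j0p by simp
    hence j1D: "j0 - 1 \<in> fst w" and j1eq: "snd w (j0 - 1) = snd w (j0 - 1 - P)" unfolding Q_def by auto
    have jPD: "j0 - P \<in> fst w" using walk_int[OF w pP j1D, of "j0 - P"] P j0p by simp
    have j1PD: "j0 - 1 - P \<in> fst w" using walk_int[OF w pP j1D, of "j0 - 1 - P"] P j0p by simp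
    have okP: "ok_pair Ab s t Rb (snd w (j0 - 1)) (snd w (j0 - P))"
    proof -
      have "ok_pair Ab s t Rb (snd w (j0 - 1 - P)) (snd w (j0 - 1 - P + 1))"
        using walk_ok[OF w j1PD] jPD by (simp add: algebra_simps)
      moreover have "j0 - 1 - P + 1 = j0 - P" by simp
      ultimately show ?thesis using j1eq by simp
    qed
    have j0D: "j0 \<in> fst w"
    proof (rule ccontr)
      assume "j0 \<notin> fst w"
      then have "\<not> ok_pair Ab s t Rb (snd w (j0 - 1)) (snd w (j0 - P))"
        using walk_rmax[OF w j1D] by simp
      then show False using okP by simp
    qed
    have ne: "snd w j0 \<noteq> snd w (j0 - P)" using j0(2) j0D Q_def by blast
    have sgn: "\<forall>i. i < j0 \<longrightarrow> nat (i - N) \<le> n \<longrightarrow> snd (snd w i)" for n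
    proof (induction n)
      case 0
      show ?case
      proof (intro allI impI)
        fix i assume "i < j0" "nat (i - N) \<le> 0"
        then have "i \<le> N" by simp
        then show "snd (snd w i)" using per dN by blast
      qed
    next
      case (Suc n)
      show ?case
      proof (intro allI impI)
        fix i assume i: "i < j0" "nat (i - N) \<le> Suc n"
        show "snd (snd w i)"
        proof (cases "i \<le> N")
          case True then show ?thesis using per dN by blast
        next
          case False
          then have "p \<le> i" using p by simp
          then have "snd w i = snd w (i - P)" using j0(3) i Q_def by blast
          moreover have "snd (snd w (i - P))" using Suc.IH i P by simp
          ultimately show ?thesis by simp
        qed
      qed
    qed
    have dP: "snd (snd w (j0 - P))" using sgn[of "nat (j0 - P - N)"] P by simp
    have ok0: "ok_pair Ab s t Rb (snd w (j0 - 1)) (snd w j0)"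
      using walk_ok[OF w j1D] j0D by simp
    have nd: "\<not> snd (snd w j0)"
    proof
      assume "snd (snd w j0)"
      then have "snd w j0 = snd w (j0 - P)" using UDf[OF lg ok0 okP] dP by blast
      then show False using ne by simp
    qed
    define k0 where "k0 = j0 - p"
    have k0: "0 < k0" using j0p k0_def by simp
    let ?m = "wshift w p" and ?m' = "wshift w (p - P)"
    have e1: "p - P + k0 = j0 - P" "p + k0 = j0" using k0_def by simp_all
    have agr: "\<forall>j. 0 \<le> j \<and> j < k0 \<longrightarrow> agree_at ?m' ?m j"
    proof (intro allI impI)
      fix j assume jj: "0 \<le> j \<and> j < k0"
      then have "Q (p + j)" using j0(3) k0_def by simp
      then have a: "p + j \<in> fst w" "snd w (p + j) = snd w (p + j - P)" unfolding Q_def by auto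
      have "p + j - P \<in> fst w" using walk_int[OF w pP a(1), of "p + j - P"] jj P by simp
      then show "agree_at ?m' ?m j" using a by (intro agree_I) (simp_all add: algebra_simps)
    qed
    have sp0: "split_at ?m' ?m k0"
      using splitR_intro[OF k0 _ _ _ agr] e1 jPD j0D ne by (simp add: algebra_simps)
    have nst: "\<not> straight_same ?m' ?m"
    proof
      assume "straight_same ?m' ?m"
      then obtain d where "\<forall>k. snd (snd ?m' k)" "\<forall>k. snd ?m k = snd ?m' (k + d)"
        unfolding straight_same_def by blast
      then have "snd (snd ?m k0)" by metis
      then show False using nd e1 by simp
    qed
    have dirs: "\<forall>k. split_at ?m' ?m k \<longrightarrow> snd (snd ?m' k) \<and> \<not> snd (snd ?m k)"
    proof (intro allI impI)
      fix k assume sk: "split_at ?m' ?m k"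
      have kk: "k \<noteq> 0" "snd ?m' k \<noteq> snd ?m k" using split_D[OF sk] by auto
      have "k = k0"
      proof (rule ccontr)
        assume "k \<noteq> k0"
        show False
        proof (cases "k < 0")
          case True
          then have "snd w (p + k - P) = snd w (p + k)" using perN[of "p + k"] p by simp
          then show False using kk by (simp add: algebra_simps)
        next
          case False
          then have kn: "0 < k" using kk by simp
          show False
          proof (cases "k < k0")
            case True
            then have "Q (p + k)" using j0(3) k0_def kn by simp
            then show False using kk unfolding Q_def by (simp add: algebra_simps)
          next
            case False
            then have "k0 < k" using \<open>k \<noteq> k0\<close> by simp
            then have "agree_at ?m' ?m k0" using splitR_ag[OF sk kn, of k0] k0 by simp
            then show False using agree_D[of ?m' ?m k0] e1 ne by simp
          qed
        qed
      qed
      moreover have "snd ?m' k0 = snd w (j0 - P)" "snd ?m k0 = snd w j0" by (simp only: wshift_snd e1)+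
      ultimately show "snd (snd ?m' k) \<and> \<not> snd (snd ?m k)" using dP nd by simp
    qed
    show ?thesis unfolding cc_less_def using nst sp0 dirs by blast
  qed
qed

lemma fmax:
  assumes "finite S" "S \<noteq> {}" "S \<subseteq> T" and irr: "\<And>x. x \<in> T \<Longrightarrow> \<not> r x x"
    and tr: "\<And>x y z. x \<in> T \<Longrightarrow> y \<in> T \<Longrightarrow> z \<in> T \<Longrightarrow> r x y \<Longrightarrow> r y z \<Longrightarrow> r x z"
  shows "\<exists>m\<in>S. \<forall>n\<in>S. \<not> r m n"
  using assms(1,2,3)
proof (induction S rule: finite_ne_induct)
  case (singleton x)
  then have "\<not> r x x" using irr by simp
  then show ?case by simp
next
  case (insert x F)
  then have FT: "F \<subseteq> T" and xT: "x \<in> T" by simp_all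
  then obtain m where m: "m \<in> F" "\<forall>n\<in>F. \<not> r m n" using insert.IH by blast
  have mT: "m \<in> T" using m(1) FT by blast
  show ?case
  proof (cases "r m x")
    case True
    have "\<forall>n\<in>insert x F. \<not> r x n"
    proof
      fix n assume n: "n \<in> insert x F"
      show "\<not> r x n"
      proof
        assume rxn: "r x n"
        have "n \<noteq> x" using irr[OF xT] rxn by metis
        then have nF: "n \<in> F" using n by simp
        then have "n \<in> T" using FT by blast
        then have "r m n" using tr[OF mT xT _ True rxn] by simp
        then show False using m(2) nF by blast
      qed
    qed
    then show ?thesis by blast
  next
    case False then show ?thesis using m by blast
  qed
qed

lemma perR_it:
  assumes "\<forall>l\<ge>N. snd w (l + P) = snd w l" "N \<le> p0" "0 < P"
  shows "snd w (p0 + int j * P) = snd w p0 \<and> N \<le> p0 + int j * P"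
proof (induction j)
  case 0 then show ?case using assms by simp
next
  case (Suc j)
  have e: "p0 + int (Suc j) * P = p0 + int j * P + P" by (simp add: algebra_simps)
  have "snd w (p0 + int j * P + P) = snd w (p0 + int j * P)" using Suc assms(1) by blast
  then show ?case unfolding e using Suc assms by simp
qed

lemma perL_it:
  assumes "\<forall>l\<le>N. snd w (l - P) = snd w l" "p0 \<le> N" "0 < P"
  shows "snd w (p0 - int j * P) = snd w p0 \<and> p0 - int j * P \<le> N"
proof (induction j)
  case 0 then show ?case using assms by simp
next
  case (Suc j)
  have e: "p0 - int (Suc j) * P = p0 - int j * P - P" by (simp add: algebra_simps)
  have "snd w (p0 - int j * P - P) = snd w (p0 - int j * P)" using Suc assms(1) by blast
  then show ?case unfolding e using Suc assms by simp
qed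

lemma chainR:
  assumes lg: "locally_gentle Vb Ab s t Rb" and w: "is_walk Ab s t Rb w"
    and P: "0 < P" and sub: "{N..} \<subseteq> fst w"
    and per: "\<forall>l\<ge>N. snd w (l + P) = snd w l \<and> snd (snd w l) = snd (snd w N)"
    and dN: "snd (snd w N)" and p0: "N \<le> p0" and wp0: "snd w p0 = (\<alpha>, True)"
  shows "wshift w (p0 + int j * P) = wshift w p0 \<or> cc_less (wshift w (p0 + int j * P)) (wshift w p0)"
proof (induction j)
  case 0 then show ?case by simp
next
  case (Suc j)
  have it: "snd w (p0 + int i * P) = snd w p0 \<and> N \<le> p0 + int i * P" for i
    using perR_it[of N w P p0 i] per p0 P by blast
  have gd: "good Ab s t Rb \<alpha> (wshift w (p0 + int i * P))" for i
  proof -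
    have "p0 + int i * P \<in> fst w" using it[of i] sub by auto
    moreover have "snd w (p0 + int i * P) = (\<alpha>, True)" using it[of i] wp0 by simp
    ultimately show ?thesis using good_wshift[OF w] by blast
  qed
  have e: "p0 + int (Suc j) * P = p0 + int j * P + P" by (simp add: algebra_simps)
  have st: "wshift w (p0 + int (Suc j) * P) = wshift w (p0 + int j * P) \<or>
      cc_less (wshift w (p0 + int (Suc j) * P)) (wshift w (p0 + int j * P))"
    unfolding e using TR[OF lg w P sub per dN, of "p0 + int j * P"] it[of j] by blast
  have g0: "good Ab s t Rb \<alpha> (wshift w p0)" using gd[of 0] by simp
  show ?case using st Suc.IH cc_trans[OF lg gd[of "Suc j"] gd[of j] g0] by metis
qed

lemma chainL:
  assumes lg: "locally_gentle Vb Ab s t Rb" and w: "is_walk Ab s t Rb w"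
    and P: "0 < P" and sub: "{..N} \<subseteq> fst w"
    and per: "\<forall>l\<le>N. snd w (l - P) = snd w l \<and> snd (snd w l) = snd (snd w N)"
    and dN: "snd (snd w N)" and p0: "p0 \<le> N" and wp0: "snd w p0 = (\<alpha>, True)"
  shows "wshift w (p0 - int j * P) = wshift w p0 \<or> cc_less (wshift w (p0 - int j * P)) (wshift w p0)"
proof (induction j)
  case 0 then show ?case by simp
next
  case (Suc j)
  have it: "snd w (p0 - int i * P) = snd w p0 \<and> p0 - int i * P \<le> N" for i
    using perL_it[of N w P p0 i] per p0 P by blast
  have gd: "good Ab s t Rb \<alpha> (wshift w (p0 - int i * P))" for i
  proof -
    have "p0 - int i * P \<in> fst w" using it[of i] sub by auto
    moreover have "snd w (p0 - int i * P) = (\<alpha>, True)" using it[of i] wp0 by simp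
    ultimately show ?thesis using good_wshift[OF w] by blast
  qed
  have e: "p0 - int (Suc j) * P = p0 - int j * P - P" by (simp add: algebra_simps)
  have st: "wshift w (p0 - int (Suc j) * P) = wshift w (p0 - int j * P) \<or>
      cc_less (wshift w (p0 - int (Suc j) * P)) (wshift w (p0 - int j * P))"
    unfolding e using TL[OF lg w P sub per dN, of "p0 - int j * P"] it[of j] by blast
  have g0: "good Ab s t Rb \<alpha> (wshift w p0)" using gd[of 0] by simp
  show ?case using st Suc.IH cc_trans[OF lg gd[of "Suc j"] gd[of j] g0] by metis
qed

lemma domR:
  assumes lg: "locally_gentle Vb Ab s t Rb" and w: "is_walk Ab s t Rb w"
  shows "\<exists>BR\<ge>0. \<forall>p. p \<in> fst w \<longrightarrow> snd w p = (\<alpha>, True) \<longrightarrow> BR < p \<longrightarrow>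
     (\<exists>p'. p' \<in> fst w \<and> - BR \<le> p' \<and> p' \<le> BR \<and> snd w p' = (\<alpha>, True) \<and>
        (wshift w p = wshift w p' \<or> cc_less (wshift w p) (wshift w p')))"
proof (cases "\<exists>h\<in>fst w. \<forall>l\<in>fst w. l \<le> h")
  case True
  then obtain h where h: "h \<in> fst w" "\<forall>l\<in>fst w. l \<le> h" by blast
  show ?thesis
  proof (rule exI[of _ "\<bar>h\<bar>"], intro conjI allI impI)
    fix p assume pp: "p \<in> fst w" "snd w p = (\<alpha>, True)" "\<bar>h\<bar> < p"
    have "p \<le> h" using h(2) pp(1) by blast
    then have False using pp(3) by linarith
    then show "\<exists>p'. p' \<in> fst w \<and> - \<bar>h\<bar> \<le> p' \<and> p' \<le> \<bar>h\<bar> \<and> snd w p' = (\<alpha>, True) \<and>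
        (wshift w p = wshift w p' \<or> cc_less (wshift w p) (wshift w p'))"
      by blast
  qed simp
next
  case False
  then obtain N P where NP: "P > 0" "{N..} \<subseteq> fst w"
    "\<forall>l\<ge>N. snd w (l + P) = snd w l \<and> snd (snd w l) = snd (snd w N)"
    using walk_rtail[OF w] by blast
  show ?thesis
  proof (rule exI[of _ "\<bar>N\<bar> + P"], intro conjI allI impI)
    show "0 \<le> \<bar>N\<bar> + P" using NP by simp
    fix p assume p: "p \<in> fst w" "snd w p = (\<alpha>, True)" "\<bar>N\<bar> + P < p"
    have pN: "N \<le> p" using p NP by simp
    have "snd (snd w p) = snd (snd w N)" using NP(3) pN by blast
    then have dN: "snd (snd w N)" using p(2) by simp
    define j where "j = nat ((p - N) div P)"
    define p0 where "p0 = N + (p - N) mod P"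
    have jn: "int j = (p - N) div P" using j_def pN NP pos_imp_zdiv_nonneg_iff[of P "p - N"] by simp
    have pe: "p = p0 + int j * P" using div_mult_mod_eq[of "p - N" P] unfolding jn p0_def by linarith
    have p0b: "N \<le> p0" "p0 < N + P" using p0_def NP by simp_all
    have it: "snd w (p0 + int j * P) = snd w p0" using perR_it[of N w P p0 j] NP p0b by blast
    have wp0: "snd w p0 = (\<alpha>, True)" using it p(2) pe by simp
    have ch: "wshift w (p0 + int j * P) = wshift w p0 \<or> cc_less (wshift w (p0 + int j * P)) (wshift w p0)"
      using chainR[OF lg w NP(1) NP(2) NP(3) dN p0b(1) wp0] .
    show "\<exists>p'. p' \<in> fst w \<and> - (\<bar>N\<bar> + P) \<le> p' \<and> p' \<le> \<bar>N\<bar> + P \<and> snd w p' = (\<alpha>, True) \<and>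
        (wshift w p = wshift w p' \<or> cc_less (wshift w p) (wshift w p'))"
    proof (rule exI[of _ p0], intro conjI)
      show "p0 \<in> fst w" using NP(2) p0b by auto
      show "- (\<bar>N\<bar> + P) \<le> p0" using p0b NP by simp
      show "p0 \<le> \<bar>N\<bar> + P" using p0b NP by simp
      show "snd w p0 = (\<alpha>, True)" by (rule wp0)
      show "wshift w p = wshift w p0 \<or> cc_less (wshift w p) (wshift w p0)" using ch pe by simp
    qed
  qed
qed

lemma domL:
  assumes lg: "locally_gentle Vb Ab s t Rb" and w: "is_walk Ab s t Rb w"
  shows "\<exists>BL\<ge>0. \<forall>p. p \<in> fst w \<longrightarrow> snd w p = (\<alpha>, True) \<longrightarrow> p < - BL \<longrightarrow>
     (\<exists>p'. p' \<in> fst w \<and> - BL \<le> p' \<and> p' \<le> BL \<and> snd w p' = (\<alpha>, True) \<and>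
        (wshift w p = wshift w p' \<or> cc_less (wshift w p) (wshift w p')))"
proof (cases "\<exists>h\<in>fst w. \<forall>l\<in>fst w. h \<le> l")
  case True
  then obtain h where h: "h \<in> fst w" "\<forall>l\<in>fst w. h \<le> l" by blast
  show ?thesis
  proof (rule exI[of _ "\<bar>h\<bar>"], intro conjI allI impI)
    fix p assume pp: "p \<in> fst w" "snd w p = (\<alpha>, True)" "p < - \<bar>h\<bar>"
    have "h \<le> p" using h(2) pp(1) by blast
    then have False using pp(3) by linarith
    then show "\<exists>p'. p' \<in> fst w \<and> - \<bar>h\<bar> \<le> p' \<and> p' \<le> \<bar>h\<bar> \<and> snd w p' = (\<alpha>, True) \<and>
        (wshift w p = wshift w p' \<or> cc_less (wshift w p) (wshift w p'))"
      by blast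
  qed simp
next
  case False
  then obtain N P where NP: "P > 0" "{..N} \<subseteq> fst w"
    "\<forall>l\<le>N. snd w (l - P) = snd w l \<and> snd (snd w l) = snd (snd w N)"
    using walk_ltail[OF w] by blast
  show ?thesis
  proof (rule exI[of _ "\<bar>N\<bar> + P"], intro conjI allI impI)
    show "0 \<le> \<bar>N\<bar> + P" using NP by simp
    fix p assume p: "p \<in> fst w" "snd w p = (\<alpha>, True)" "p < - (\<bar>N\<bar> + P)"
    have pN: "p \<le> N" using p NP by simp
    have "snd (snd w p) = snd (snd w N)" using NP(3) pN by blast
    then have dN: "snd (snd w N)" using p(2) by simp
    define j where "j = nat ((N - p) div P)"
    define p0 where "p0 = N - (N - p) mod P"
    have jn: "int j = (N - p) div P" using j_def pN NP pos_imp_zdiv_nonneg_iff[of P "N - p"] by simp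
    have pe: "p = p0 - int j * P" using div_mult_mod_eq[of "N - p" P] unfolding jn p0_def by linarith
    have p0b: "p0 \<le> N" "N - P < p0" using p0_def NP by simp_all
    have it: "snd w (p0 - int j * P) = snd w p0" using perL_it[of N w P p0 j] NP p0b by blast
    have wp0: "snd w p0 = (\<alpha>, True)" using it p(2) pe by simp
    have ch: "wshift w (p0 - int j * P) = wshift w p0 \<or> cc_less (wshift w (p0 - int j * P)) (wshift w p0)"
      using chainL[OF lg w NP(1) NP(2) NP(3) dN p0b(1) wp0] .
    show "\<exists>p'. p' \<in> fst w \<and> - (\<bar>N\<bar> + P) \<le> p' \<and> p' \<le> \<bar>N\<bar> + P \<and> snd w p' = (\<alpha>, True) \<and>
        (wshift w p = wshift w p' \<or> cc_less (wshift w p) (wshift w p'))"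
    proof (rule exI[of _ p0], intro conjI)
      show "p0 \<in> fst w" using NP(2) p0b by auto
      show "- (\<bar>N\<bar> + P) \<le> p0" using p0b NP by simp
      show "p0 \<le> \<bar>N\<bar> + P" using p0b NP by simp
      show "snd w p0 = (\<alpha>, True)" by (rule wp0)
      show "wshift w p = wshift w p0 \<or> cc_less (wshift w p) (wshift w p0)" using ch pe by simp
    qed
  qed
qed

lemma dom:
  assumes lg: "locally_gentle Vb Ab s t Rb" and w: "is_walk Ab s t Rb w"
  shows "\<exists>B. \<forall>p. p \<in> fst w \<longrightarrow> snd w p = (\<alpha>, True) \<longrightarrow>
     (\<exists>p'. p' \<in> fst w \<and> - B \<le> p' \<and> p' \<le> B \<and> snd w p' = (\<alpha>, True) \<and>
        (wshift w p = wshift w p' \<or> cc_less (wshift w p) (wshift w p')))"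
proof -
  obtain BR where BR: "BR \<ge> 0" "\<forall>p. p \<in> fst w \<longrightarrow> snd w p = (\<alpha>, True) \<longrightarrow> BR < p \<longrightarrow>
     (\<exists>p'. p' \<in> fst w \<and> - BR \<le> p' \<and> p' \<le> BR \<and> snd w p' = (\<alpha>, True) \<and>
        (wshift w p = wshift w p' \<or> cc_less (wshift w p) (wshift w p')))"
    using domR[OF lg w, of \<alpha>] by blast
  obtain BL where BL: "BL \<ge> 0" "\<forall>p. p \<in> fst w \<longrightarrow> snd w p = (\<alpha>, True) \<longrightarrow> p < - BL \<longrightarrow>
     (\<exists>p'. p' \<in> fst w \<and> - BL \<le> p' \<and> p' \<le> BL \<and> snd w p' = (\<alpha>, True) \<and>
        (wshift w p = wshift w p' \<or> cc_less (wshift w p) (wshift w p')))"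
    using domL[OF lg w, of \<alpha>] by blast
  show ?thesis
  proof (rule exI[of _ "BR + BL"], intro allI impI)
    fix p assume p: "p \<in> fst w" "snd w p = (\<alpha>, True)"
    show "\<exists>p'. p' \<in> fst w \<and> - (BR + BL) \<le> p' \<and> p' \<le> BR + BL \<and> snd w p' = (\<alpha>, True) \<and>
        (wshift w p = wshift w p' \<or> cc_less (wshift w p) (wshift w p'))"
    proof (cases "BR < p")
      case True
      then obtain p' where "p' \<in> fst w" "- BR \<le> p'" "p' \<le> BR" "snd w p' = (\<alpha>, True)"
        "wshift w p = wshift w p' \<or> cc_less (wshift w p) (wshift w p')" using BR(2) p by blast
      then show ?thesis using BR(1) BL(1) by (intro exI[of _ p']) auto
    next
      case False
      show ?thesis
      proof (cases "p < - BL")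
        case True
        then obtain p' where "p' \<in> fst w" "- BL \<le> p'" "p' \<le> BL" "snd w p' = (\<alpha>, True)"
          "wshift w p = wshift w p' \<or> cc_less (wshift w p) (wshift w p')" using BL(2) p by blast
        then show ?thesis using BR(1) BL(1) by (intro exI[of _ p']) auto
      next
        case False
        then show ?thesis using \<open>\<not> BR < p\<close> p BR(1) BL(1) by (intro exI[of _ p]) auto
      qed
    qed
  qed
qed

lemma in_marked:
  assumes "w \<in> F \<union> wrev ` F" "p \<in> fst w" "fst (snd w p) = \<alpha>"
  shows "mnorm w p \<in> marked_set F \<alpha>"
proof (cases "w \<in> F")
  case True then show ?thesis using assms unfolding marked_set_def by blast
next
  case False
  then obtain v where v: "v \<in> F" "w = wrev v" using assms(1) by blast
  have "mnorm w p = mnorm v (- p)" using mnorm_wrev[of v "- p"] v by simp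
  moreover have "- p \<in> fst v" "fst (snd v (- p)) = \<alpha>" using assms v by auto
  ultimately show ?thesis using v(1) unfolding marked_set_def by blast
qed

theorem lemma5p7:
  fixes V Vb :: "'v set" and A Ab :: "'a set" and s t :: "'a \<Rightarrow> 'v"
    and R Rb :: "('a \<times> 'a) set" and F :: "'a walkrep set" and \<alpha> :: 'a
  assumes "locally_gentle V A s t R"
    and "blossoming V A R Vb Ab Rb s t"
    and "finite F"
    and "nk_face Ab s t Rb F"
    and "\<alpha> \<in> Ab"
  shows "marked_set F \<alpha> = {} \<or>
         (\<exists>m\<in>marked_set F \<alpha>. \<forall>n\<in>marked_set F \<alpha>. \<not> cc_less m n)"
proof -
  have lg: "locally_gentle Vb Ab s t Rb" using assms(2) unfolding blossoming_def by blast
  have wF: "\<And>w. w \<in> F \<Longrightarrow> is_walk Ab s t Rb w" using assms(4) unfolding nk_face_def by blast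
  define F2 where "F2 = F \<union> wrev ` F"
  have wF2: "\<And>w. w \<in> F2 \<Longrightarrow> is_walk Ab s t Rb w" using wF walk_wrev unfolding F2_def by blast
  have fF2: "finite F2" using assms(3) unfolding F2_def by simp
  define M where "M = marked_set F \<alpha>"
  have "\<forall>w\<in>F2. \<exists>B. \<forall>p. p \<in> fst w \<longrightarrow> snd w p = (\<alpha>, True) \<longrightarrow>
     (\<exists>p'. p' \<in> fst w \<and> - B \<le> p' \<and> p' \<le> B \<and> snd w p' = (\<alpha>, True) \<and>
        (wshift w p = wshift w p' \<or> cc_less (wshift w p) (wshift w p')))"
    using dom[OF lg wF2] by blast
  then obtain B where B: "\<And>w p. w \<in> F2 \<Longrightarrow> p \<in> fst w \<Longrightarrow> snd w p = (\<alpha>, True) \<Longrightarrow>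
     (\<exists>p'. p' \<in> fst w \<and> - B w \<le> p' \<and> p' \<le> B w \<and> snd w p' = (\<alpha>, True) \<and>
        (wshift w p = wshift w p' \<or> cc_less (wshift w p) (wshift w p')))"
    by metis
  define M0 where "M0 = M \<inter> (\<Union>w\<in>F2. (\<lambda>p. mnorm w p) ` {- B w..B w})"
  have fM0: "finite M0" unfolding M0_def using fF2 by auto
  have M0M: "M0 \<subseteq> M" unfolding M0_def by blast
  have goodM: "good Ab s t Rb \<alpha> n" if "n \<in> M" for n
  proof -
    from that obtain w p where "w \<in> F" "p \<in> fst w" "fst (snd w p) = \<alpha>" "n = mnorm w p"
      unfolding M_def marked_set_def by blast
    then show ?thesis using good_mnorm[OF wF] by blast
  qed
  have domM: "\<exists>n'\<in>M0. n = n' \<or> cc_less n n'" if "n \<in> M" for n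
  proof -
    from that obtain w p where wp: "w \<in> F" "p \<in> fst w" "fst (snd w p) = \<alpha>" "n = mnorm w p"
      unfolding M_def marked_set_def by blast
    obtain w2 p2 where w2: "w2 \<in> F2" "p2 \<in> fst w2" "snd w2 p2 = (\<alpha>, True)" "n = wshift w2 p2"
    proof (cases "snd (snd w p)")
      case True
      then have "snd w p = (\<alpha>, True)" using wp(3) by (simp add: prod_eq_iff)
      moreover have "n = wshift w p" using wp(4) True unfolding mnorm_def by simp
      ultimately show ?thesis using that[of w p] wp unfolding F2_def by blast
    next
      case False
      then have "snd (wrev w) (- p) = (\<alpha>, True)" using wp(3) by (simp add: prod_eq_iff)
      moreover have "n = wshift (wrev w) (- p)" using wp(4) False unfolding mnorm_def by simp
      moreover have "- p \<in> fst (wrev w)" using wp(2) by simp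
      moreover have "wrev w \<in> F2" using wp(1) unfolding F2_def by blast
      ultimately show ?thesis using that[of "wrev w" "- p"] by blast
    qed
    obtain p' where p': "p' \<in> fst w2" "- B w2 \<le> p'" "p' \<le> B w2" "snd w2 p' = (\<alpha>, True)"
        "wshift w2 p2 = wshift w2 p' \<or> cc_less (wshift w2 p2) (wshift w2 p')"
      using B[OF w2(1-3)] by blast
    have e: "mnorm w2 p' = wshift w2 p'" using p'(4) unfolding mnorm_def by simp
    have "mnorm w2 p' \<in> M" unfolding M_def
      using in_marked[of w2 F p' \<alpha>] w2(1) p'(1,4) unfolding F2_def by simp
    moreover have "mnorm w2 p' \<in> (\<Union>w\<in>F2. (\<lambda>p. mnorm w p) ` {- B w..B w})"
    proof -
      have "mnorm w2 p' \<in> (\<lambda>p. mnorm w2 p) ` {- B w2..B w2}" using p'(2,3) by simp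
      then show ?thesis using w2(1) by blast
    qed
    ultimately have "mnorm w2 p' \<in> M0" unfolding M0_def by blast
    then show ?thesis using p'(5) w2(4) e by metis
  qed
  show ?thesis
  proof (cases "M = {}")
    case True then show ?thesis unfolding M_def by simp
  next
    case False
    then obtain n0 where "n0 \<in> M" by blast
    then have ne: "M0 \<noteq> {}" using domM by blast
    have irr: "\<And>x. x \<in> M \<Longrightarrow> \<not> cc_less x x" using cc_irrefl by blast
    have tr: "\<And>x y z. x \<in> M \<Longrightarrow> y \<in> M \<Longrightarrow> z \<in> M \<Longrightarrow> cc_less x y \<Longrightarrow> cc_less y z \<Longrightarrow> cc_less x z"
      using cc_trans[OF lg] goodM by blast
    obtain m where m: "m \<in> M0" "\<forall>n\<in>M0. \<not> cc_less m n"
      using fmax[OF fM0 ne M0M, of cc_less] irr tr by blast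
    have "\<forall>n\<in>M. \<not> cc_less m n"
    proof (intro ballI notI)
      fix n assume n: "n \<in> M" and mn: "cc_less m n"
      obtain n' where n': "n' \<in> M0" "n = n' \<or> cc_less n n'" using domM[OF n] by blast
      show False
      proof (cases "n = n'")
        case True then show False using m n' mn by blast
      next
        case False
        then have "cc_less n n'" using n' by blast
        then have "cc_less m n'" using tr[of m n n'] m(1) M0M n n'(1) mn by blast
        then show False using m n'(1) by blast
      qed
    qed
    then show ?thesis using m(1) M0M unfolding M_def by blast
  qed
qed

end
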